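(* Let $K$ be a simplicial Abelian group (written multiplicatively) and $X$ a simplicial set. Viewing the commutative monoid $\mathrm{Twist}_K(X)$ of $K$-valued twisting functions on $X$ (under levelwise product) as a discrete symmetric monoidal category, the functor $\mathrm{Twist}_K(X)\to\mathsf{Bun}_K(X)$, $\eta\mapsto K\times_\eta X$, is symmetric monoidal, with structure isomorphisms the canonical isomorphism $K\times_1X\cong K\times X$ and the isomorphisms $(K\times_\eta X)\otimes_K(K\times_\xi X)\to K\times_{\eta\xi}X$, $[(k,x),(h,x)]\mapsto(kh,x)$.
   Context: A twisting function $\eta=\{\eta_n:X_n\to K_{n-1}\}_{n\ge1}$ is one for which $d_i(g,x)=(d_ig,d_ix)$ ($i>0$), $d_0(g,x)=(d_0(g)\eta_n(x),d_0x)$, $s_i(g,x)=(s_ig,s_ix)$ make $\{K_n\times X_n\}$ a simplicial set $K\times_\eta X$, a principal $K$-bundle over $X$ via left multiplication on the first factor; $1$ denotes the trivial twisting function. $\mathsf{Bun}_K(X)$ is the groupoid of principal $K$-bundles over $X$ (simplicial sets with levelwise free left $K$-action and quotient map to $X$; morphisms are equivariant maps over $X$), symmetric monoidal under $E\otimes_KF=(E\times_XF)/((ke,f)\sim(e,kf))$ with unit $K\times X$, associator $[e,[f,g]]\mapsto[[e,f],g]$ and braiding $[e,f]\mapsto[f,e]$. *)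

theory Defs
  imports "HOL-Algebra.Group"
begin

text \<open>face S n i : level n to level n-1 (n \<ge> 1, i \<le> n);
      degen S n i : level n to level n+1 (i \<le> n).\<close>

record 'a sset =
  cells :: "nat \<Rightarrow> 'a set"
  face  :: "nat \<Rightarrow> nat \<Rightarrow> 'a \<Rightarrow> 'a"
  degen :: "nat \<Rightarrow> nat \<Rightarrow> 'a \<Rightarrow> 'a"

definition is_sset :: "('a, 'b) sset_scheme \<Rightarrow> bool" where
  "is_sset S \<longleftrightarrow>
     (\<forall>n i x. 1 \<le> n \<and> i \<le> n \<and> x \<in> cells S n \<longrightarrow> face S n i x \<in> cells S (n - 1)) \<and>
     (\<forall>n i x. i \<le> n \<and> x \<in> cells S n \<longrightarrow> degen S n i x \<in> cells S (Suc n)) \<and>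
     (\<forall>n i j x. 2 \<le> n \<and> i < j \<and> j \<le> n \<and> x \<in> cells S n \<longrightarrow>
        face S (n - 1) i (face S n j x) = face S (n - 1) (j - 1) (face S n i x)) \<and>
     (\<forall>n i j x. i < j \<and> j \<le> n \<and> x \<in> cells S n \<longrightarrow>
        face S (Suc n) i (degen S n j x) = degen S (n - 1) (j - 1) (face S n i x)) \<and>
     (\<forall>n j x. j \<le> n \<and> x \<in> cells S n \<longrightarrow>
        face S (Suc n) j (degen S n j x) = x \<and> face S (Suc n) (Suc j) (degen S n j x) = x) \<and>
     (\<forall>n i j x. Suc j < i \<and> i \<le> Suc n \<and> x \<in> cells S n \<longrightarrow>
        face S (Suc n) i (degen S n j x) = degen S (n - 1) j (face S n (i - 1) x)) \<and>
     (\<forall>n i j x. i \<le> j \<and> j \<le> n \<and> x \<in> cells S n \<longrightarrow>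
        degen S (Suc n) i (degen S n j x) = degen S (Suc n) (Suc j) (degen S n i x))"

definition smap :: "('a, 'c) sset_scheme \<Rightarrow> ('b, 'd) sset_scheme \<Rightarrow> (nat \<Rightarrow> 'a \<Rightarrow> 'b) \<Rightarrow> bool" where
  "smap S T f \<longleftrightarrow>
     (\<forall>n x. x \<in> cells S n \<longrightarrow> f n x \<in> cells T n) \<and>
     (\<forall>n i x. 1 \<le> n \<and> i \<le> n \<and> x \<in> cells S n \<longrightarrow> f (n - 1) (face S n i x) = face T n i (f n x)) \<and>
     (\<forall>n i x. i \<le> n \<and> x \<in> cells S n \<longrightarrow> f (Suc n) (degen S n i x) = degen T n i (f n x))"

record 'a sgrp = "'a sset" +
  gmul :: "nat \<Rightarrow> 'a \<Rightarrow> 'a \<Rightarrow> 'a"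
  gone :: "nat \<Rightarrow> 'a"

definition lev :: "'a sgrp \<Rightarrow> nat \<Rightarrow> 'a monoid" where
  "lev K n = \<lparr>carrier = cells K n, mult = gmul K n, one = gone K n\<rparr>"

definition is_sab_group :: "'a sgrp \<Rightarrow> bool" where
  "is_sab_group K \<longleftrightarrow> is_sset K \<and> (\<forall>n. comm_group (lev K n)) \<and>
     (\<forall>n i. 1 \<le> n \<and> i \<le> n \<longrightarrow> face K n i \<in> hom (lev K n) (lev K (n - 1))) \<and>
     (\<forall>n i. i \<le> n \<longrightarrow> degen K n i \<in> hom (lev K n) (lev K (Suc n)))"

definition tw_sset :: "'k sgrp \<Rightarrow> 'x sset \<Rightarrow> (nat \<Rightarrow> 'x \<Rightarrow> 'k) \<Rightarrow> ('k \<times> 'x) sset" where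
  "tw_sset K X \<eta> = \<lparr>cells = (\<lambda>n. cells K n \<times> cells X n),
     face = (\<lambda>n i (g, x). if i = 0
               then (gmul K (n - 1) (face K n 0 g) (\<eta> n x), face X n 0 x)
               else (face K n i g, face X n i x)),
     degen = (\<lambda>n i (g, x). (degen K n i g, degen X n i x))\<rparr>"

definition is_twisting :: "'k sgrp \<Rightarrow> 'x sset \<Rightarrow> (nat \<Rightarrow> 'x \<Rightarrow> 'k) \<Rightarrow> bool" where
  "is_twisting K X \<eta> \<longleftrightarrow>
     (\<forall>n x. 1 \<le> n \<and> x \<in> cells X n \<longrightarrow> \<eta> n x \<in> cells K (n - 1)) \<and> is_sset (tw_sset K X \<eta>)"

definition tw_one :: "'k sgrp \<Rightarrow> nat \<Rightarrow> 'x \<Rightarrow> 'k" where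
  "tw_one K = (\<lambda>n x. gone K (n - 1))"

definition tw_mult :: "'k sgrp \<Rightarrow> (nat \<Rightarrow> 'x \<Rightarrow> 'k) \<Rightarrow> (nat \<Rightarrow> 'x \<Rightarrow> 'k) \<Rightarrow> nat \<Rightarrow> 'x \<Rightarrow> 'k" where
  "tw_mult K \<eta> \<xi> = (\<lambda>n x. gmul K (n - 1) (\<eta> n x) (\<xi> n x))"

record ('e, 'k, 'x) pbun =
  tot  :: "'e sset"
  act  :: "nat \<Rightarrow> 'k \<Rightarrow> 'e \<Rightarrow> 'e"
  proj :: "nat \<Rightarrow> 'e \<Rightarrow> 'x"

definition is_pbun :: "'k sgrp \<Rightarrow> 'x sset \<Rightarrow> ('e, 'k, 'x) pbun \<Rightarrow> bool" where
  "is_pbun K X E \<longleftrightarrow> is_sset (tot E) \<and> smap (tot E) X (proj E) \<and>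
     (\<forall>n k e. k \<in> cells K n \<and> e \<in> cells (tot E) n \<longrightarrow> act E n k e \<in> cells (tot E) n) \<and>
     (\<forall>n e. e \<in> cells (tot E) n \<longrightarrow> act E n (gone K n) e = e) \<and>
     (\<forall>n k h e. k \<in> cells K n \<and> h \<in> cells K n \<and> e \<in> cells (tot E) n \<longrightarrow>
        act E n (gmul K n k h) e = act E n k (act E n h e)) \<and>
     (\<forall>n i k e. 1 \<le> n \<and> i \<le> n \<and> k \<in> cells K n \<and> e \<in> cells (tot E) n \<longrightarrow>
        face (tot E) n i (act E n k e) = act E (n - 1) (face K n i k) (face (tot E) n i e)) \<and>
     (\<forall>n i k e. i \<le> n \<and> k \<in> cells K n \<and> e \<in> cells (tot E) n \<longrightarrow>
        degen (tot E) n i (act E n k e) = act E (Suc n) (degen K n i k) (degen (tot E) n i e)) \<and>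
     (\<forall>n k e. k \<in> cells K n \<and> e \<in> cells (tot E) n \<and> act E n k e = e \<longrightarrow> k = gone K n) \<and>
     (\<forall>n. proj E n ` cells (tot E) n = cells X n) \<and>
     (\<forall>n e e'. e \<in> cells (tot E) n \<and> e' \<in> cells (tot E) n \<longrightarrow>
        (proj E n e = proj E n e' \<longleftrightarrow> (\<exists>k \<in> cells K n. e' = act E n k e)))"

definition bun_hom :: "'k sgrp \<Rightarrow> 'x sset \<Rightarrow> ('e, 'k, 'x) pbun \<Rightarrow> ('f, 'k, 'x) pbun
    \<Rightarrow> (nat \<Rightarrow> 'e \<Rightarrow> 'f) \<Rightarrow> bool" where
  "bun_hom K X E F f \<longleftrightarrow> smap (tot E) (tot F) f \<and>
     (\<forall>n k e. k \<in> cells K n \<and> e \<in> cells (tot E) n \<longrightarrow> f n (act E n k e) = act F n k (f n e)) \<and>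
     (\<forall>n e. e \<in> cells (tot E) n \<longrightarrow> proj F n (f n e) = proj E n e)"

definition bun_iso :: "'k sgrp \<Rightarrow> 'x sset \<Rightarrow> ('e, 'k, 'x) pbun \<Rightarrow> ('f, 'k, 'x) pbun
    \<Rightarrow> (nat \<Rightarrow> 'e \<Rightarrow> 'f) \<Rightarrow> bool" where
  "bun_iso K X E F f \<longleftrightarrow> is_pbun K X E \<and> is_pbun K X F \<and> bun_hom K X E F f \<and>
     (\<exists>g. bun_hom K X F E g \<and>
        (\<forall>n e. e \<in> cells (tot E) n \<longrightarrow> g n (f n e) = e) \<and>
        (\<forall>n y. y \<in> cells (tot F) n \<longrightarrow> f n (g n y) = y))"

definition tw_bun :: "'k sgrp \<Rightarrow> 'x sset \<Rightarrow> (nat \<Rightarrow> 'x \<Rightarrow> 'k) \<Rightarrow> ('k \<times> 'x, 'k, 'x) pbun" where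
  "tw_bun K X \<eta> = \<lparr>tot = tw_sset K X \<eta>,
     act = (\<lambda>n k (g, x). (gmul K n k g, x)), proj = (\<lambda>n. snd)\<rparr>"

definition prod_bun :: "'k sgrp \<Rightarrow> 'x sset \<Rightarrow> ('k \<times> 'x, 'k, 'x) pbun" where
  "prod_bun K X = \<lparr>tot = \<lparr>cells = (\<lambda>n. cells K n \<times> cells X n),
        face = (\<lambda>n i (g, x). (face K n i g, face X n i x)),
        degen = (\<lambda>n i (g, x). (degen K n i g, degen X n i x))\<rparr>,
     act = (\<lambda>n k (g, x). (gmul K n k g, x)), proj = (\<lambda>n. snd)\<rparr>"

definition fibprod :: "('e, 'k, 'x) pbun \<Rightarrow> ('f, 'k, 'x) pbun \<Rightarrow> nat \<Rightarrow> ('e \<times> 'f) set" where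
  "fibprod E F n = {(e, f). e \<in> cells (tot E) n \<and> f \<in> cells (tot F) n \<and> proj E n e = proj F n f}"

definition tgen :: "'k sgrp \<Rightarrow> ('e, 'k, 'x) pbun \<Rightarrow> ('f, 'k, 'x) pbun \<Rightarrow> nat
    \<Rightarrow> (('e \<times> 'f) \<times> ('e \<times> 'f)) set" where
  "tgen K E F n = {((act E n k e, f), (e, act F n k f)) | k e f.
      k \<in> cells K n \<and> (e, f) \<in> fibprod E F n \<and> (act E n k e, f) \<in> fibprod E F n \<and>
      (e, act F n k f) \<in> fibprod E F n}"

definition trel :: "'k sgrp \<Rightarrow> ('e, 'k, 'x) pbun \<Rightarrow> ('f, 'k, 'x) pbun \<Rightarrow> nat
    \<Rightarrow> (('e \<times> 'f) \<times> ('e \<times> 'f)) set" where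
  "trel K E F n = (tgen K E F n \<union> (tgen K E F n)\<inverse>)\<^sup>*"

definition tcls :: "'k sgrp \<Rightarrow> ('e, 'k, 'x) pbun \<Rightarrow> ('f, 'k, 'x) pbun \<Rightarrow> nat
    \<Rightarrow> 'e \<times> 'f \<Rightarrow> ('e \<times> 'f) set" where
  "tcls K E F n p = trel K E F n `` {p}"

definition trep :: "'a set \<Rightarrow> 'a" where
  "trep c = (SOME p. p \<in> c)"

definition tensor :: "'k sgrp \<Rightarrow> ('e, 'k, 'x) pbun \<Rightarrow> ('f, 'k, 'x) pbun
    \<Rightarrow> (('e \<times> 'f) set, 'k, 'x) pbun" where
  "tensor K E F = \<lparr>tot = \<lparr>cells = (\<lambda>n. fibprod E F n // trel K E F n),
       face = (\<lambda>n i c. tcls K E F (n - 1)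
                (face (tot E) n i (fst (trep c)), face (tot F) n i (snd (trep c)))),
       degen = (\<lambda>n i c. tcls K E F (Suc n)
                (degen (tot E) n i (fst (trep c)), degen (tot F) n i (snd (trep c))))\<rparr>,
     act = (\<lambda>n k c. tcls K E F n (act E n k (fst (trep c)), snd (trep c))),
     proj = (\<lambda>n c. proj E n (fst (trep c)))\<rparr>"

definition tmap :: "'k sgrp \<Rightarrow> ('e', 'k, 'x) pbun \<Rightarrow> ('f', 'k, 'x) pbun
    \<Rightarrow> (nat \<Rightarrow> 'e \<Rightarrow> 'e') \<Rightarrow> (nat \<Rightarrow> 'f \<Rightarrow> 'f') \<Rightarrow> nat \<Rightarrow> ('e \<times> 'f) set \<Rightarrow> ('e' \<times> 'f') set" where
  "tmap K E' F' f g n c = tcls K E' F' n (f n (fst (trep c)), g n (snd (trep c)))"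

definition assocB :: "'k sgrp \<Rightarrow> ('e, 'k, 'x) pbun \<Rightarrow> ('f, 'k, 'x) pbun \<Rightarrow> ('g, 'k, 'x) pbun
    \<Rightarrow> nat \<Rightarrow> ('e \<times> ('f \<times> 'g) set) set \<Rightarrow> (('e \<times> 'f) set \<times> 'g) set" where
  "assocB K E F G n w =
     (let e = fst (trep w); fg = trep (snd (trep w))
      in tcls K (tensor K E F) G n (tcls K E F n (e, fst fg), snd fg))"

definition braidB :: "'k sgrp \<Rightarrow> ('e, 'k, 'x) pbun \<Rightarrow> ('f, 'k, 'x) pbun
    \<Rightarrow> nat \<Rightarrow> ('e \<times> 'f) set \<Rightarrow> ('f \<times> 'e) set" where
  "braidB K E F n c = tcls K F E n (snd (trep c), fst (trep c))"

definition lunitB :: "('e, 'k, 'x) pbun \<Rightarrow> nat \<Rightarrow> (('k \<times> 'x) \<times> 'e) set \<Rightarrow> 'e" where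
  "lunitB E n c = act E n (fst (fst (trep c))) (snd (trep c))"

definition runitB :: "('e, 'k, 'x) pbun \<Rightarrow> nat \<Rightarrow> ('e \<times> ('k \<times> 'x)) set \<Rightarrow> 'e" where
  "runitB E n c = act E n (fst (snd (trep c))) (fst (trep c))"

definition phi :: "'k sgrp \<Rightarrow> nat \<Rightarrow> (('k \<times> 'x) \<times> ('k \<times> 'x)) set \<Rightarrow> 'k \<times> 'x" where
  "phi K n c = (gmul K n (fst (fst (trep c))) (fst (snd (trep c))), snd (fst (trep c)))"

end

theory Submission
  imports Defs
begin


lemma lev_simps[simp]: "carrier (lev K n) = cells K n" "mult (lev K n) = gmul K n" "one (lev K n) = gone K n"
  by (simp_all add: lev_def)

lemma cgK: "is_sab_group K \<Longrightarrow> comm_group (lev K n)"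
  by (simp add: is_sab_group_def)

lemma ssK: "is_sab_group K \<Longrightarrow> is_sset K"
  by (simp add: is_sab_group_def)

lemma grpK: "is_sab_group K \<Longrightarrow> group (lev K n)"
  by (simp add: is_sab_group_def comm_group.axioms(2))

lemma gmul_closed[simp]: "is_sab_group K \<Longrightarrow> a \<in> cells K n \<Longrightarrow> b \<in> cells K n \<Longrightarrow> gmul K n a b \<in> cells K n"
proof -
  assume K: "is_sab_group K" "a \<in> cells K n" "b \<in> cells K n"
  interpret G: comm_group "lev K n" using cgK[OF K(1)] .
  show ?thesis using G.m_closed[of a b] K by simp
qed

lemma gone_closed[simp]: "is_sab_group K \<Longrightarrow> gone K n \<in> cells K n"
proof -
  assume K: "is_sab_group K"
  interpret G: comm_group "lev K n" using cgK[OF K(1)] .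
  show ?thesis using G.one_closed by simp
qed

lemma gassoc: "is_sab_group K \<Longrightarrow> a \<in> cells K n \<Longrightarrow> b \<in> cells K n \<Longrightarrow> c \<in> cells K n \<Longrightarrow>
   gmul K n (gmul K n a b) c = gmul K n a (gmul K n b c)"
proof -
  assume K: "is_sab_group K" "a \<in> cells K n" "b \<in> cells K n" "c \<in> cells K n"
  interpret G: comm_group "lev K n" using cgK[OF K(1)] .
  show ?thesis using G.m_assoc[of a b c] K by simp
qed

lemma gcomm: "is_sab_group K \<Longrightarrow> a \<in> cells K n \<Longrightarrow> b \<in> cells K n \<Longrightarrow>
   gmul K n a b = gmul K n b a"
proof -
  assume K: "is_sab_group K" "a \<in> cells K n" "b \<in> cells K n"
  interpret G: comm_group "lev K n" using cgK[OF K(1)] .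
  show ?thesis using G.m_comm[of a b] K by simp
qed

lemma glone[simp]: "is_sab_group K \<Longrightarrow> a \<in> cells K n \<Longrightarrow> gmul K n (gone K n) a = a"
proof -
  assume K: "is_sab_group K" "a \<in> cells K n"
  interpret G: comm_group "lev K n" using cgK[OF K(1)] .
  show ?thesis using G.l_one[of a] K by simp
qed

lemma grone[simp]: "is_sab_group K \<Longrightarrow> a \<in> cells K n \<Longrightarrow> gmul K n a (gone K n) = a"
proof -
  assume K: "is_sab_group K" "a \<in> cells K n"
  interpret G: comm_group "lev K n" using cgK[OF K(1)] .
  show ?thesis using G.r_one[of a] K by simp
qed

lemma grcancel: "is_sab_group K \<Longrightarrow> a \<in> cells K n \<Longrightarrow> b \<in> cells K n \<Longrightarrow> c \<in> cells K n \<Longrightarrow>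
   gmul K n b a = gmul K n c a \<longleftrightarrow> b = c"
proof -
  assume K: "is_sab_group K" "a \<in> cells K n" "b \<in> cells K n" "c \<in> cells K n"
  interpret G: comm_group "lev K n" using cgK[OF K(1)] .
  show ?thesis using G.right_cancel[of a b c] K by simp
qed

lemma glcancel: "is_sab_group K \<Longrightarrow> a \<in> cells K n \<Longrightarrow> b \<in> cells K n \<Longrightarrow> c \<in> cells K n \<Longrightarrow>
   gmul K n a b = gmul K n a c \<longleftrightarrow> b = c"
  using grcancel[of K a n b c] gcomm[of K a n b] gcomm[of K a n c] by simp

lemma gsolve: "is_sab_group K \<Longrightarrow> a \<in> cells K n \<Longrightarrow> b \<in> cells K n \<Longrightarrow>
   \<exists>k \<in> cells K n. b = gmul K n k a"
proof -
  assume K: "is_sab_group K" and a: "a \<in> cells K n" and b: "b \<in> cells K n"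
  interpret G: comm_group "lev K n" using cgK[OF K] .
  have i: "inv\<^bsub>lev K n\<^esub> a \<in> cells K n" using G.inv_closed[of a] a by simp
  have "gmul K n (gmul K n b (inv\<^bsub>lev K n\<^esub> a)) a = gmul K n b (gmul K n (inv\<^bsub>lev K n\<^esub> a) a)"
    using gassoc[OF K b i a] .
  also have "gmul K n (inv\<^bsub>lev K n\<^esub> a) a = gone K n" using G.l_inv[of a] a by simp
  finally have "b = gmul K n (gmul K n b (inv\<^bsub>lev K n\<^esub> a)) a" using K b by simp
  moreover have "gmul K n b (inv\<^bsub>lev K n\<^esub> a) \<in> cells K n" using K b i by simp
  ultimately show ?thesis by blast
qed

lemma gone_unique: "is_sab_group K \<Longrightarrow> a \<in> cells K n \<Longrightarrow> k \<in> cells K n \<Longrightarrow> gmul K n k a = a \<Longrightarrow> k = gone K n"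
  using grcancel[of K a n k "gone K n"] by simp

lemma face_hom: "is_sab_group K \<Longrightarrow> 1 \<le> n \<Longrightarrow> i \<le> n \<Longrightarrow> face K n i \<in> hom (lev K n) (lev K (n - 1))"
  by (simp add: is_sab_group_def)

lemma degen_hom: "is_sab_group K \<Longrightarrow> i \<le> n \<Longrightarrow> degen K n i \<in> hom (lev K n) (lev K (Suc n))"
  by (simp add: is_sab_group_def)

lemma face_mul: "is_sab_group K \<Longrightarrow> 1 \<le> n \<Longrightarrow> i \<le> n \<Longrightarrow> a \<in> cells K n \<Longrightarrow> b \<in> cells K n \<Longrightarrow>
   face K n i (gmul K n a b) = gmul K (n - 1) (face K n i a) (face K n i b)"
  using hom_mult[OF face_hom, of K n i a b] by simp

lemma degen_mul: "is_sab_group K \<Longrightarrow> i \<le> n \<Longrightarrow> a \<in> cells K n \<Longrightarrow> b \<in> cells K n \<Longrightarrow>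
   degen K n i (gmul K n a b) = gmul K (Suc n) (degen K n i a) (degen K n i b)"
  using hom_mult[OF degen_hom, of K i n a b] by simp

lemma face_one: "is_sab_group K \<Longrightarrow> 1 \<le> n \<Longrightarrow> i \<le> n \<Longrightarrow> face K n i (gone K n) = gone K (n - 1)"
  using hom_one[OF face_hom grpK grpK, of K n i] by simp

lemma degen_one: "is_sab_group K \<Longrightarrow> i \<le> n \<Longrightarrow> degen K n i (gone K n) = gone K (Suc n)"
  using hom_one[OF degen_hom grpK grpK, of K i n] by simp

lemma ss1: assumes "is_sset S" shows "\<forall>n i x. 1 \<le> n \<and> i \<le> n \<and> x \<in> cells S n \<longrightarrow> face S n i x \<in> cells S (n - 1)"
  using assms unfolding is_sset_def by (elim conjE) assumption

lemma ss2: assumes "is_sset S" shows "\<forall>n i x. i \<le> n \<and> x \<in> cells S n \<longrightarrow> degen S n i x \<in> cells S (Suc n)"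
  using assms unfolding is_sset_def by (elim conjE) assumption

lemma ss3: assumes "is_sset S" shows "\<forall>n i j x. 2 \<le> n \<and> i < j \<and> j \<le> n \<and> x \<in> cells S n \<longrightarrow>
        face S (n - 1) i (face S n j x) = face S (n - 1) (j - 1) (face S n i x)"
  using assms unfolding is_sset_def by (elim conjE) assumption

lemma ss4: assumes "is_sset S" shows "\<forall>n i j x. i < j \<and> j \<le> n \<and> x \<in> cells S n \<longrightarrow>
        face S (Suc n) i (degen S n j x) = degen S (n - 1) (j - 1) (face S n i x)"
  using assms unfolding is_sset_def by (elim conjE) assumption

lemma ss5: assumes "is_sset S" shows "\<forall>n j x. j \<le> n \<and> x \<in> cells S n \<longrightarrow>
        face S (Suc n) j (degen S n j x) = x \<and> face S (Suc n) (Suc j) (degen S n j x) = x"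
  using assms unfolding is_sset_def by (elim conjE) assumption

lemma ss6: assumes "is_sset S" shows "\<forall>n i j x. Suc j < i \<and> i \<le> Suc n \<and> x \<in> cells S n \<longrightarrow>
        face S (Suc n) i (degen S n j x) = degen S (n - 1) j (face S n (i - 1) x)"
  using assms unfolding is_sset_def by (elim conjE) assumption

lemma ss7: assumes "is_sset S" shows "\<forall>n i j x. i \<le> j \<and> j \<le> n \<and> x \<in> cells S n \<longrightarrow>
        degen S (Suc n) i (degen S n j x) = degen S (Suc n) (Suc j) (degen S n i x)"
  using assms unfolding is_sset_def by (elim conjE) assumption

lemma face_cl: "is_sset S \<Longrightarrow> 1 \<le> n \<Longrightarrow> i \<le> n \<Longrightarrow> x \<in> cells S n \<Longrightarrow> face S n i x \<in> cells S (n - 1)"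
  using ss1 by blast

lemma degen_cl: "is_sset S \<Longrightarrow> i \<le> n \<Longrightarrow> x \<in> cells S n \<Longrightarrow> degen S n i x \<in> cells S (Suc n)"
  using ss2 by blast

lemma faceK_cl[simp]: "is_sab_group K \<Longrightarrow> 1 \<le> n \<Longrightarrow> i \<le> n \<Longrightarrow> x \<in> cells K n \<Longrightarrow> face K n i x \<in> cells K (n - 1)"
  by (rule face_cl[OF ssK])

lemma degenK_cl[simp]: "is_sab_group K \<Longrightarrow> i \<le> n \<Longrightarrow> x \<in> cells K n \<Longrightarrow> degen K n i x \<in> cells K (Suc n)"
  by (rule degen_cl[OF ssK])


lemma ss3r: "is_sset S \<Longrightarrow> 2 \<le> n \<Longrightarrow> i < j \<Longrightarrow> j \<le> n \<Longrightarrow> x \<in> cells S n \<Longrightarrow>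
        face S (n - 1) i (face S n j x) = face S (n - 1) (j - 1) (face S n i x)"
  by (rule ss3[rule_format]) simp_all
lemma ss4r: "is_sset S \<Longrightarrow> i < j \<Longrightarrow> j \<le> n \<Longrightarrow> x \<in> cells S n \<Longrightarrow>
        face S (Suc n) i (degen S n j x) = degen S (n - 1) (j - 1) (face S n i x)"
  by (rule ss4[rule_format]) simp_all
lemma ss5a: "is_sset S \<Longrightarrow> j \<le> n \<Longrightarrow> x \<in> cells S n \<Longrightarrow> face S (Suc n) j (degen S n j x) = x"
  using ss5[rule_format, of S j n x] by simp
lemma ss5b: "is_sset S \<Longrightarrow> j \<le> n \<Longrightarrow> x \<in> cells S n \<Longrightarrow> face S (Suc n) (Suc j) (degen S n j x) = x"
  using ss5[rule_format, of S j n x] by simp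
lemma ss6r: "is_sset S \<Longrightarrow> Suc j < i \<Longrightarrow> i \<le> Suc n \<Longrightarrow> x \<in> cells S n \<Longrightarrow>
        face S (Suc n) i (degen S n j x) = degen S (n - 1) j (face S n (i - 1) x)"
  by (rule ss6[rule_format]) simp_all
lemma ss7r: "is_sset S \<Longrightarrow> i \<le> j \<Longrightarrow> j \<le> n \<Longrightarrow> x \<in> cells S n \<Longrightarrow>
        degen S (Suc n) i (degen S n j x) = degen S (Suc n) (Suc j) (degen S n i x)"
  by (rule ss7[rule_format]) simp_all



lemma tw_cells[simp]: "cells (tw_sset K X \<eta>) n = cells K n \<times> cells X n"
  by (simp add: tw_sset_def)
lemma tw_face0[simp]: "face (tw_sset K X \<eta>) n 0 (g, x) = (gmul K (n - 1) (face K n 0 g) (\<eta> n x), face X n 0 x)"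
  by (simp add: tw_sset_def)
lemma tw_faceS[simp]: "i \<noteq> 0 \<Longrightarrow> face (tw_sset K X \<eta>) n i (g, x) = (face K n i g, face X n i x)"
  by (simp add: tw_sset_def)
lemma tw_degen[simp]: "degen (tw_sset K X \<eta>) n i (g, x) = (degen K n i g, degen X n i x)"
  by (simp add: tw_sset_def)

definition twc :: "'k sgrp \<Rightarrow> 'x sset \<Rightarrow> (nat \<Rightarrow> 'x \<Rightarrow> 'k) \<Rightarrow> bool" where
"twc K X \<eta> \<longleftrightarrow>
 (\<forall>n x. 1 \<le> n \<and> x \<in> cells X n \<longrightarrow> \<eta> n x \<in> cells K (n - 1)) \<and>
 (\<forall>m j x. 2 \<le> j \<and> j \<le> Suc (Suc m) \<and> x \<in> cells X (Suc (Suc m)) \<longrightarrow>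
    \<eta> (Suc m) (face X (Suc (Suc m)) j x) = face K (Suc m) (j - 1) (\<eta> (Suc (Suc m)) x)) \<and>
 (\<forall>m x. x \<in> cells X (Suc (Suc m)) \<longrightarrow>
    \<eta> (Suc m) (face X (Suc (Suc m)) 1 x) = gmul K m (face K (Suc m) 0 (\<eta> (Suc (Suc m)) x)) (\<eta> (Suc m) (face X (Suc (Suc m)) 0 x))) \<and>
 (\<forall>m j x. 1 \<le> j \<and> j \<le> Suc m \<and> x \<in> cells X (Suc m) \<longrightarrow>
    \<eta> (Suc (Suc m)) (degen X (Suc m) j x) = degen K m (j - 1) (\<eta> (Suc m) x)) \<and>
 (\<forall>n x. x \<in> cells X n \<longrightarrow> \<eta> (Suc n) (degen X n 0 x) = gone K n)"

lemma twcC: "twc K X \<eta> \<Longrightarrow> x \<in> cells X (Suc m) \<Longrightarrow> \<eta> (Suc m) x \<in> cells K m"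
  unfolding twc_def by (elim conjE allE[of _ "Suc m"] allE[of _ x]) simp
lemma twcC': "twc K X \<eta> \<Longrightarrow> 1 \<le> n \<Longrightarrow> x \<in> cells X n \<Longrightarrow> \<eta> n x \<in> cells K (n - 1)"
  unfolding twc_def by (elim conjE allE[of _ n] allE[of _ x]) simp
lemma twc1: "twc K X \<eta> \<Longrightarrow> 2 \<le> j \<Longrightarrow> j \<le> Suc (Suc m) \<Longrightarrow> x \<in> cells X (Suc (Suc m)) \<Longrightarrow>
    \<eta> (Suc m) (face X (Suc (Suc m)) j x) = face K (Suc m) (j - 1) (\<eta> (Suc (Suc m)) x)"
  unfolding twc_def by (elim conjE allE[of _ m] allE[of _ j] allE[of _ x]) simp
lemma twc2: "twc K X \<eta> \<Longrightarrow> x \<in> cells X (Suc (Suc m)) \<Longrightarrow>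
    \<eta> (Suc m) (face X (Suc (Suc m)) 1 x) = gmul K m (face K (Suc m) 0 (\<eta> (Suc (Suc m)) x)) (\<eta> (Suc m) (face X (Suc (Suc m)) 0 x))"
  unfolding twc_def by (elim conjE allE[of _ m] allE[of _ x]) simp
lemma twc3: "twc K X \<eta> \<Longrightarrow> 1 \<le> j \<Longrightarrow> j \<le> Suc m \<Longrightarrow> x \<in> cells X (Suc m) \<Longrightarrow>
    \<eta> (Suc (Suc m)) (degen X (Suc m) j x) = degen K m (j - 1) (\<eta> (Suc m) x)"
  unfolding twc_def by (elim conjE allE[of _ m] allE[of _ j] allE[of _ x]) simp
lemma twc4: "twc K X \<eta> \<Longrightarrow> x \<in> cells X n \<Longrightarrow> \<eta> (Suc n) (degen X n 0 x) = gone K n"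
  unfolding twc_def by (elim conjE allE[of _ n] allE[of _ x]) simp

lemma twisting_twc:
  assumes K: "is_sab_group K" and X: "is_sset X" and T: "is_twisting K X \<eta>"
  shows "twc K X \<eta>"
proof -
  let ?S = "tw_sset K X \<eta>"
  have S: "is_sset ?S" using T by (simp add: is_twisting_def)
  have C: "\<forall>n x. 1 \<le> n \<and> x \<in> cells X n \<longrightarrow> \<eta> n x \<in> cells K (n - 1)"
    using T by (simp add: is_twisting_def)
  have Cs: "\<eta> (Suc m) x \<in> cells K m" if "x \<in> cells X (Suc m)" for m x
    using C that by (metis diff_Suc_1 le_add1 plus_1_eq_Suc)
  have T1: "\<eta> (Suc m) (face X (Suc (Suc m)) j x) = face K (Suc m) (j - 1) (\<eta> (Suc (Suc m)) x)"
    if "2 \<le> j" "j \<le> Suc (Suc m)" "x \<in> cells X (Suc (Suc m))" for m j x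
  proof -
    have fx: "face X (Suc (Suc m)) j x \<in> cells X (Suc m)" using face_cl[OF X, of "Suc (Suc m)" j x] that by simp
    have j1: "j - 1 \<noteq> 0" using that by simp
    show ?thesis using ss3r[OF S, of "Suc (Suc m)" 0 j "(gone K (Suc (Suc m)), x)"] that j1 Cs[OF fx] Cs[OF that(3)] K
      by (simp add: face_one)
  qed
  have T2: "\<eta> (Suc m) (face X (Suc (Suc m)) 1 x) = gmul K m (face K (Suc m) 0 (\<eta> (Suc (Suc m)) x)) (\<eta> (Suc m) (face X (Suc (Suc m)) 0 x))"
    if "x \<in> cells X (Suc (Suc m))" for m x
  proof -
    have fx: "face X (Suc (Suc m)) 1 x \<in> cells X (Suc m)" using face_cl[OF X, of "Suc (Suc m)" 1 x] that by simp
    have fx0: "face X (Suc (Suc m)) 0 x \<in> cells X (Suc m)" using face_cl[OF X, of "Suc (Suc m)" 0 x] that by simp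
    have c: "\<eta> (Suc (Suc m)) x \<in> cells K (Suc m)" using Cs[OF that] .
    have c2: "face K (Suc m) 0 (\<eta> (Suc (Suc m)) x) \<in> cells K m" using faceK_cl[OF K, of "Suc m" 0, OF _ _ c] by simp
    show ?thesis using ss3r[OF S, of "Suc (Suc m)" 0 1 "(gone K (Suc (Suc m)), x)"] that Cs[OF fx] Cs[OF fx0] c c2 K
      by (simp add: face_one face_mul)
  qed
  have T3: "\<eta> (Suc (Suc m)) (degen X (Suc m) j x) = degen K m (j - 1) (\<eta> (Suc m) x)"
    if "1 \<le> j" "j \<le> Suc m" "x \<in> cells X (Suc m)" for m j x
  proof -
    have dx: "degen X (Suc m) j x \<in> cells X (Suc (Suc m))" using degen_cl[OF X, of j "Suc m" x] that by simp
    have c: "\<eta> (Suc m) x \<in> cells K m" using Cs[OF that(3)] .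
    have c2: "degen K m (j - 1) (\<eta> (Suc m) x) \<in> cells K (Suc m)" using degenK_cl[OF K, of "j - 1" m, OF _ c] that by simp
    show ?thesis using ss4r[OF S, of 0 j "Suc m" "(gone K (Suc m), x)"] that Cs[OF dx] c c2 K
      by (simp add: face_one degen_one)
  qed
  have T4: "\<eta> (Suc n) (degen X n 0 x) = gone K n" if "x \<in> cells X n" for n x
  proof -
    have dx: "degen X n 0 x \<in> cells X (Suc n)" using degen_cl[OF X, of 0 n x] that by simp
    show ?thesis using ss5a[OF S, of 0 n "(gone K n, x)"] that Cs[OF dx] K
      by (simp add: face_one degen_one)
  qed
  show ?thesis unfolding twc_def using C T1 T2 T3 T4 by blast
qed

lemma twc_twisting:
  assumes K: "is_sab_group K" and X: "is_sset X" and T: "twc K X \<eta>"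
  shows "is_twisting K X \<eta>"
proof -
  let ?S = "tw_sset K X \<eta>"
  have SK: "is_sset K" using ssK[OF K] .
  have P1: "\<forall>n i z. 1 \<le> n \<and> i \<le> n \<and> z \<in> cells ?S n \<longrightarrow> face ?S n i z \<in> cells ?S (n - 1)"
  proof (intro allI impI)
    fix n i z assume H: "1 \<le> n \<and> i \<le> n \<and> z \<in> cells ?S n"
    obtain g x where z: "z = (g, x)" by fastforce
    have g: "g \<in> cells K n" and x: "x \<in> cells X n" using H z by auto
    show "face ?S n i z \<in> cells ?S (n - 1)"
    proof (cases "i = 0")
      case True
      then show ?thesis using z H g x K face_cl[OF X] twcC'[OF T] faceK_cl[OF K] by simp
    next
      case False
      then show ?thesis using z H g x K face_cl[OF X] faceK_cl[OF K] by simp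
    qed
  qed
  have P2: "\<forall>n i z. i \<le> n \<and> z \<in> cells ?S n \<longrightarrow> degen ?S n i z \<in> cells ?S (Suc n)"
  proof (intro allI impI)
    fix n i z assume H: "i \<le> n \<and> z \<in> cells ?S n"
    obtain g x where z: "z = (g, x)" by fastforce
    show "degen ?S n i z \<in> cells ?S (Suc n)" using H z K degen_cl[OF X] by auto
  qed
  have P3: "\<forall>n i j z. 2 \<le> n \<and> i < j \<and> j \<le> n \<and> z \<in> cells ?S n \<longrightarrow>
        face ?S (n - 1) i (face ?S n j z) = face ?S (n - 1) (j - 1) (face ?S n i z)"
  proof (intro allI impI)
    fix n i j z assume H: "2 \<le> n \<and> i < j \<and> j \<le> n \<and> z \<in> cells ?S n"
    obtain g x where z: "z = (g, x)" by fastforce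
    have g: "g \<in> cells K n" and x: "x \<in> cells X n" using H z by auto
    obtain m where n: "n = Suc (Suc m)" using H by (metis add_2_eq_Suc le_Suc_ex)
    show "face ?S (n - 1) i (face ?S n j z) = face ?S (n - 1) (j - 1) (face ?S n i z)"
    proof (cases "i = 0")
      case False
      then show ?thesis using z H ss3r[OF SK, of n i j g] ss3r[OF X, of n i j x] g x by simp
    next
      case i0: True
      have fg: "face K (Suc (Suc m)) 0 g \<in> cells K (Suc m)" using faceK_cl[OF K, of "Suc (Suc m)" 0 g] g n by simp
      have ex: "\<eta> (Suc (Suc m)) x \<in> cells K (Suc m)" using twcC[OF T] x n by simp
      have fx0: "face X (Suc (Suc m)) 0 x \<in> cells X (Suc m)" using face_cl[OF X, of "Suc (Suc m)" 0 x] x n by simp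
      have fmul: "face K (Suc m) jj (gmul K (Suc m) (face K (Suc (Suc m)) 0 g) (\<eta> (Suc (Suc m)) x)) = gmul K m (face K (Suc m) jj (face K (Suc (Suc m)) 0 g)) (face K (Suc m) jj (\<eta> (Suc (Suc m)) x))"
        if "jj \<le> Suc m" for jj
        using face_mul[OF K, of "Suc m" jj, OF _ that fg ex] by simp
      show ?thesis
      proof (cases "j = 1")
        case j1: True
        have KL: "face K (Suc m) 0 (face K (Suc (Suc m)) 1 g) = face K (Suc m) 0 (face K (Suc (Suc m)) 0 g)"
          using ss3r[OF SK, of n 0 1 g] g n by simp
        have XL: "face X (Suc m) 0 (face X (Suc (Suc m)) 1 x) = face X (Suc m) 0 (face X (Suc (Suc m)) 0 x)"
          using ss3r[OF X, of n 0 1 x] x n by simp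
        have a1: "face K (Suc m) 0 (face K (Suc (Suc m)) 0 g) \<in> cells K m" using faceK_cl[OF K, of "Suc m" 0, OF _ _ fg] by simp
        have a2: "face K (Suc m) 0 (\<eta> (Suc (Suc m)) x) \<in> cells K m" using faceK_cl[OF K, of "Suc m" 0, OF _ _ ex] by simp
        have a3: "\<eta> (Suc m) (face X (Suc (Suc m)) 0 x) \<in> cells K m" using twcC[OF T fx0] .
        show ?thesis using i0 j1 z n KL XL twc2[OF T, of x m] x fmul[of 0] gassoc[OF K a1 a2 a3] by simp
      next
        case j2: False
        have KL: "face K (Suc m) 0 (face K (Suc (Suc m)) j g) = face K (Suc m) (j - 1) (face K (Suc (Suc m)) 0 g)"
          using ss3r[OF SK, of n 0 j g] g n H i0 by simp
        have XL: "face X (Suc m) 0 (face X (Suc (Suc m)) j x) = face X (Suc m) (j - 1) (face X (Suc (Suc m)) 0 x)"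
          using ss3r[OF X, of n 0 j x] x n H i0 by simp
        have jj: "j - 1 \<le> Suc m" "j - 1 \<noteq> 0" "2 \<le> j" using H n i0 j2 by auto
        show ?thesis using i0 z n KL XL twc1[OF T, of j m x] x H fmul[of "j - 1"] jj by simp
      qed
    qed
  qed
  have P4: "\<forall>n i j z. i < j \<and> j \<le> n \<and> z \<in> cells ?S n \<longrightarrow>
        face ?S (Suc n) i (degen ?S n j z) = degen ?S (n - 1) (j - 1) (face ?S n i z)"
  proof (intro allI impI)
    fix n i j z assume H: "i < j \<and> j \<le> n \<and> z \<in> cells ?S n"
    obtain g x where z: "z = (g, x)" by fastforce
    have g: "g \<in> cells K n" and x: "x \<in> cells X n" using H z by auto
    obtain m where n: "n = Suc m" using H by (metis less_le_trans not0_implies_Suc not_less0)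
    show "face ?S (Suc n) i (degen ?S n j z) = degen ?S (n - 1) (j - 1) (face ?S n i z)"
    proof (cases "i = 0")
      case False
      then show ?thesis using z H ss4r[OF SK, of i j n g] ss4r[OF X, of i j n x] g x by simp
    next
      case i0: True
      have fg: "face K (Suc m) 0 g \<in> cells K m" using faceK_cl[OF K, of "Suc m" 0 g] g n by simp
      have ex: "\<eta> (Suc m) x \<in> cells K m" using twcC[OF T] x n by simp
      have KL: "face K (Suc (Suc m)) 0 (degen K (Suc m) j g) = degen K m (j - 1) (face K (Suc m) 0 g)"
        using ss4r[OF SK, of 0 j n g] g n H i0 by simp
      have XL: "face X (Suc (Suc m)) 0 (degen X (Suc m) j x) = degen X m (j - 1) (face X (Suc m) 0 x)"
        using ss4r[OF X, of 0 j n x] x n H i0 by simp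
      have jj: "j - 1 \<le> m" "1 \<le> j" "j \<le> Suc m" using H n i0 by auto
      show ?thesis using i0 z n KL XL twc3[OF T, of j m x] x degen_mul[OF K jj(1) fg ex] jj by simp
    qed
  qed
  have P5: "\<forall>n j z. j \<le> n \<and> z \<in> cells ?S n \<longrightarrow>
        face ?S (Suc n) j (degen ?S n j z) = z \<and> face ?S (Suc n) (Suc j) (degen ?S n j z) = z"
  proof (intro allI impI)
    fix n j z assume H: "j \<le> n \<and> z \<in> cells ?S n"
    obtain g x where z: "z = (g, x)" by fastforce
    have g: "g \<in> cells K n" and x: "x \<in> cells X n" using H z by auto
    have b: "face ?S (Suc n) (Suc j) (degen ?S n j z) = z"
      using z H ss5b[OF SK, of j n g] ss5b[OF X, of j n x] g x by simp
    have a: "face ?S (Suc n) j (degen ?S n j z) = z"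
    proof (cases "j = 0")
      case False
      then show ?thesis using z H ss5a[OF SK, of j n g] ss5a[OF X, of j n x] g x by simp
    next
      case True
      then show ?thesis using z H ss5a[OF SK, of j n g] ss5a[OF X, of j n x] g x twc4[OF T x] K by simp
    qed
    show "face ?S (Suc n) j (degen ?S n j z) = z \<and> face ?S (Suc n) (Suc j) (degen ?S n j z) = z"
      using a b by simp
  qed
  have P6: "\<forall>n i j z. Suc j < i \<and> i \<le> Suc n \<and> z \<in> cells ?S n \<longrightarrow>
        face ?S (Suc n) i (degen ?S n j z) = degen ?S (n - 1) j (face ?S n (i - 1) z)"
  proof (intro allI impI)
    fix n i j z assume H: "Suc j < i \<and> i \<le> Suc n \<and> z \<in> cells ?S n"
    obtain g x where z: "z = (g, x)" by fastforce
    have g: "g \<in> cells K n" and x: "x \<in> cells X n" using H z by auto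
    have "i \<noteq> 0" "i - 1 \<noteq> 0" using H by auto
    then show "face ?S (Suc n) i (degen ?S n j z) = degen ?S (n - 1) j (face ?S n (i - 1) z)"
      using z H ss6r[OF SK, of j i n g] ss6r[OF X, of j i n x] g x by simp
  qed
  have P7: "\<forall>n i j z. i \<le> j \<and> j \<le> n \<and> z \<in> cells ?S n \<longrightarrow>
        degen ?S (Suc n) i (degen ?S n j z) = degen ?S (Suc n) (Suc j) (degen ?S n i z)"
  proof (intro allI impI)
    fix n i j z assume H: "i \<le> j \<and> j \<le> n \<and> z \<in> cells ?S n"
    obtain g x where z: "z = (g, x)" by fastforce
    have g: "g \<in> cells K n" and x: "x \<in> cells X n" using H z by auto
    show "degen ?S (Suc n) i (degen ?S n j z) = degen ?S (Suc n) (Suc j) (degen ?S n i z)"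
      using z H ss7r[OF SK, of i j n g] ss7r[OF X, of i j n x] g x by simp
  qed
  have "is_sset ?S" unfolding is_sset_def
    apply (intro conjI)
    apply (rule P1) apply (rule P2) apply (rule P3) apply (rule P4) apply (rule P5) apply (rule P6) apply (rule P7)
    done
  moreover have "\<forall>n x. 1 \<le> n \<and> x \<in> cells X n \<longrightarrow> \<eta> n x \<in> cells K (n - 1)"
    using twcC'[OF T] by blast
  ultimately show ?thesis unfolding is_twisting_def by blast
qed

lemma twisting_iff: "is_sab_group K \<Longrightarrow> is_sset X \<Longrightarrow> is_twisting K X \<eta> \<longleftrightarrow> twc K X \<eta>"
  using twisting_twc twc_twisting by blast



lemma gswap: "is_sab_group K \<Longrightarrow> a \<in> cells K n \<Longrightarrow> b \<in> cells K n \<Longrightarrow> c \<in> cells K n \<Longrightarrow> d \<in> cells K n \<Longrightarrow>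
  gmul K n (gmul K n a b) (gmul K n c d) = gmul K n (gmul K n a c) (gmul K n b d)"
proof -
  assume K: "is_sab_group K" and abcd: "a \<in> cells K n" "b \<in> cells K n" "c \<in> cells K n" "d \<in> cells K n"
  have cd: "gmul K n c d \<in> cells K n" "gmul K n b d \<in> cells K n" using K abcd by auto
  have "gmul K n (gmul K n a b) (gmul K n c d) = gmul K n a (gmul K n b (gmul K n c d))"
    using gassoc[OF K abcd(1) abcd(2) cd(1)] .
  also have "gmul K n b (gmul K n c d) = gmul K n (gmul K n b c) d"
    using gassoc[OF K abcd(2) abcd(3) abcd(4)] by simp
  also have "gmul K n b c = gmul K n c b" using gcomm[OF K abcd(2) abcd(3)] .
  also have "gmul K n (gmul K n c b) d = gmul K n c (gmul K n b d)"
    using gassoc[OF K abcd(3) abcd(2) abcd(4)] .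
  also have "gmul K n a (gmul K n c (gmul K n b d)) = gmul K n (gmul K n a c) (gmul K n b d)"
    using gassoc[OF K abcd(1) abcd(3) cd(2)] by simp
  finally show ?thesis .
qed

lemma twc_one: assumes K: "is_sab_group K" shows "twc K X (tw_one K)"
  unfolding twc_def tw_one_def using K
  by (auto simp add: face_one[OF K, of "Suc m" for m] degen_one[OF K])

lemma twc_mult: assumes K: "is_sab_group K" and X: "is_sset X" and E: "twc K X \<eta>" and F: "twc K X \<xi>"
  shows "twc K X (tw_mult K \<eta> \<xi>)"
proof -
  have C: "\<forall>n x. 1 \<le> n \<and> x \<in> cells X n \<longrightarrow> tw_mult K \<eta> \<xi> n x \<in> cells K (n - 1)"
    unfolding tw_mult_def using twcC'[OF E] twcC'[OF F] K by simp
  have T1: "\<forall>m j x. 2 \<le> j \<and> j \<le> Suc (Suc m) \<and> x \<in> cells X (Suc (Suc m)) \<longrightarrow>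
    tw_mult K \<eta> \<xi> (Suc m) (face X (Suc (Suc m)) j x) = face K (Suc m) (j - 1) (tw_mult K \<eta> \<xi> (Suc (Suc m)) x)"
  proof (intro allI impI)
    fix m j x assume H: "2 \<le> j \<and> j \<le> Suc (Suc m) \<and> x \<in> cells X (Suc (Suc m))"
    have a: "\<eta> (Suc (Suc m)) x \<in> cells K (Suc m)" "\<xi> (Suc (Suc m)) x \<in> cells K (Suc m)"
      using twcC[OF E] twcC[OF F] H by auto
    have jj: "j - 1 \<le> Suc m" using H by auto
    show "tw_mult K \<eta> \<xi> (Suc m) (face X (Suc (Suc m)) j x) = face K (Suc m) (j - 1) (tw_mult K \<eta> \<xi> (Suc (Suc m)) x)"
      unfolding tw_mult_def using twc1[OF E, of j m x] twc1[OF F, of j m x] H face_mul[OF K _ jj a] by simp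
  qed
  have T2: "\<forall>m x. x \<in> cells X (Suc (Suc m)) \<longrightarrow>
    tw_mult K \<eta> \<xi> (Suc m) (face X (Suc (Suc m)) 1 x) = gmul K m (face K (Suc m) 0 (tw_mult K \<eta> \<xi> (Suc (Suc m)) x)) (tw_mult K \<eta> \<xi> (Suc m) (face X (Suc (Suc m)) 0 x))"
  proof (intro allI impI)
    fix m x assume H: "x \<in> cells X (Suc (Suc m))"
    have a: "\<eta> (Suc (Suc m)) x \<in> cells K (Suc m)" "\<xi> (Suc (Suc m)) x \<in> cells K (Suc m)"
      using twcC[OF E] twcC[OF F] H by auto
    have fx0: "face X (Suc (Suc m)) 0 x \<in> cells X (Suc m)" using face_cl[OF X, of "Suc (Suc m)" 0 x] H by simp
    have b: "\<eta> (Suc m) (face X (Suc (Suc m)) 0 x) \<in> cells K m" "\<xi> (Suc m) (face X (Suc (Suc m)) 0 x) \<in> cells K m"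
      using twcC[OF E fx0] twcC[OF F fx0] .
    have c: "face K (Suc m) 0 (\<eta> (Suc (Suc m)) x) \<in> cells K m" "face K (Suc m) 0 (\<xi> (Suc (Suc m)) x) \<in> cells K m"
      using faceK_cl[OF K, of "Suc m" 0] a by auto
    show "tw_mult K \<eta> \<xi> (Suc m) (face X (Suc (Suc m)) 1 x) = gmul K m (face K (Suc m) 0 (tw_mult K \<eta> \<xi> (Suc (Suc m)) x)) (tw_mult K \<eta> \<xi> (Suc m) (face X (Suc (Suc m)) 0 x))"
      unfolding tw_mult_def using twc2[OF E H] twc2[OF F H] face_mul[OF K, of "Suc m" 0, OF _ _ a] gswap[OF K c(1) b(1) c(2) b(2)] by simp
  qed
  have T3: "\<forall>m j x. 1 \<le> j \<and> j \<le> Suc m \<and> x \<in> cells X (Suc m) \<longrightarrow>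
    tw_mult K \<eta> \<xi> (Suc (Suc m)) (degen X (Suc m) j x) = degen K m (j - 1) (tw_mult K \<eta> \<xi> (Suc m) x)"
  proof (intro allI impI)
    fix m j x assume H: "1 \<le> j \<and> j \<le> Suc m \<and> x \<in> cells X (Suc m)"
    have a: "\<eta> (Suc m) x \<in> cells K m" "\<xi> (Suc m) x \<in> cells K m"
      using twcC[OF E] twcC[OF F] H by auto
    have jj: "j - 1 \<le> m" using H by auto
    show "tw_mult K \<eta> \<xi> (Suc (Suc m)) (degen X (Suc m) j x) = degen K m (j - 1) (tw_mult K \<eta> \<xi> (Suc m) x)"
      unfolding tw_mult_def using twc3[OF E, of j m x] twc3[OF F, of j m x] H degen_mul[OF K jj a] by simp
  qed
  have T4: "\<forall>n x. x \<in> cells X n \<longrightarrow> tw_mult K \<eta> \<xi> (Suc n) (degen X n 0 x) = gone K n"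
    unfolding tw_mult_def using twc4[OF E] twc4[OF F] K by simp
  show ?thesis unfolding twc_def using C T1 T2 T3 T4 by blast
qed



lemma twb_tot[simp]: "tot (tw_bun K X \<eta>) = tw_sset K X \<eta>" by (simp add: tw_bun_def)
lemma twb_act[simp]: "act (tw_bun K X \<eta>) n k (g, x) = (gmul K n k g, x)" by (simp add: tw_bun_def)
lemma twb_proj[simp]: "proj (tw_bun K X \<eta>) n z = snd z" by (simp add: tw_bun_def)

lemma cellsK_ne: "is_sab_group K \<Longrightarrow> cells K n \<noteq> {}"
  using gone_closed by blast

lemma tw_pbun:
  assumes K: "is_sab_group K" and X: "is_sset X" and T: "is_twisting K X \<eta>"
  shows "is_pbun K X (tw_bun K X \<eta>)"
proof -
  let ?E = "tw_bun K X \<eta>"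
  let ?S = "tw_sset K X \<eta>"
  have Tc: "twc K X \<eta>" using twisting_twc[OF K X T] .
  have H1: "is_sset (tot ?E)" using T by (simp add: is_twisting_def)
  have H2: "smap (tot ?E) X (proj ?E)"
    unfolding smap_def
  proof (intro conjI allI impI)
    fix n z assume "z \<in> cells (tot ?E) n" then show "proj ?E n z \<in> cells X n" by auto
  next
    fix n i z assume H: "1 \<le> n \<and> i \<le> n \<and> z \<in> cells (tot ?E) n"
    obtain g x where z: "z = (g, x)" by fastforce
    show "proj ?E (n - 1) (face (tot ?E) n i z) = face X n i (proj ?E n z)"
      using z by (cases "i = 0") simp_all
  next
    fix n i z assume H: "i \<le> n \<and> z \<in> cells (tot ?E) n"
    obtain g x where z: "z = (g, x)" by fastforce
    show "proj ?E (Suc n) (degen (tot ?E) n i z) = degen X n i (proj ?E n z)"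
      using z by simp
  qed
  have H3: "\<forall>n k e. k \<in> cells K n \<and> e \<in> cells (tot ?E) n \<longrightarrow> act ?E n k e \<in> cells (tot ?E) n"
    using K by auto
  have H4: "\<forall>n e. e \<in> cells (tot ?E) n \<longrightarrow> act ?E n (gone K n) e = e"
    using K by auto
  have H5: "\<forall>n k h e. k \<in> cells K n \<and> h \<in> cells K n \<and> e \<in> cells (tot ?E) n \<longrightarrow>
        act ?E n (gmul K n k h) e = act ?E n k (act ?E n h e)"
    using K gassoc[OF K] by auto
  have H6: "\<forall>n i k e. 1 \<le> n \<and> i \<le> n \<and> k \<in> cells K n \<and> e \<in> cells (tot ?E) n \<longrightarrow>
        face (tot ?E) n i (act ?E n k e) = act ?E (n - 1) (face K n i k) (face (tot ?E) n i e)"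
  proof (intro allI impI)
    fix n i k e assume H: "1 \<le> n \<and> i \<le> n \<and> k \<in> cells K n \<and> e \<in> cells (tot ?E) n"
    obtain g x where z: "e = (g, x)" by fastforce
    have g: "g \<in> cells K n" and x: "x \<in> cells X n" and k: "k \<in> cells K n" using H z by auto
    have ni: "1 \<le> n" "i \<le> n" using H by auto
    have fk: "face K n i k \<in> cells K (n - 1)" "face K n i g \<in> cells K (n - 1)"
      using faceK_cl[OF K ni k] faceK_cl[OF K ni g] .
    have ex: "\<eta> n x \<in> cells K (n - 1)" using twcC'[OF Tc] H x by simp
    show "face (tot ?E) n i (act ?E n k e) = act ?E (n - 1) (face K n i k) (face (tot ?E) n i e)"
    proof (cases "i = 0")
      case True
      then show ?thesis using z face_mul[OF K, of n i k g] H g k gassoc[OF K fk ex] by simp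
    next
      case False
      then show ?thesis using z face_mul[OF K, of n i k g] H g k by simp
    qed
  qed
  have H7: "\<forall>n i k e. i \<le> n \<and> k \<in> cells K n \<and> e \<in> cells (tot ?E) n \<longrightarrow>
        degen (tot ?E) n i (act ?E n k e) = act ?E (Suc n) (degen K n i k) (degen (tot ?E) n i e)"
  proof (intro allI impI)
    fix n i k e assume H: "i \<le> n \<and> k \<in> cells K n \<and> e \<in> cells (tot ?E) n"
    obtain g x where z: "e = (g, x)" by fastforce
    show "degen (tot ?E) n i (act ?E n k e) = act ?E (Suc n) (degen K n i k) (degen (tot ?E) n i e)"
      using z degen_mul[OF K, of i n k g] H by auto
  qed
  have H8: "\<forall>n k e. k \<in> cells K n \<and> e \<in> cells (tot ?E) n \<and> act ?E n k e = e \<longrightarrow> k = gone K n"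
  proof (intro allI impI)
    fix n k e assume H: "k \<in> cells K n \<and> e \<in> cells (tot ?E) n \<and> act ?E n k e = e"
    obtain g x where z: "e = (g, x)" by fastforce
    show "k = gone K n" using gone_unique[OF K, of g n k] H z by auto
  qed
  have H9: "\<forall>n. proj ?E n ` cells (tot ?E) n = cells X n"
    using cellsK_ne[OF K] by auto
  have H10: "\<forall>n e e'. e \<in> cells (tot ?E) n \<and> e' \<in> cells (tot ?E) n \<longrightarrow>
        (proj ?E n e = proj ?E n e' \<longleftrightarrow> (\<exists>k \<in> cells K n. e' = act ?E n k e))"
  proof (intro allI impI)
    fix n e e' assume H: "e \<in> cells (tot ?E) n \<and> e' \<in> cells (tot ?E) n"
    obtain g x where z: "e = (g, x)" by fastforce
    obtain g' x' where z': "e' = (g', x')" by fastforce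
    show "proj ?E n e = proj ?E n e' \<longleftrightarrow> (\<exists>k \<in> cells K n. e' = act ?E n k e)"
    proof
      assume "proj ?E n e = proj ?E n e'"
      then have "x = x'" using z z' by simp
      moreover obtain k where "k \<in> cells K n" "g' = gmul K n k g" using gsolve[OF K, of g n g'] H z z' by auto
      ultimately show "\<exists>k \<in> cells K n. e' = act ?E n k e" using z z' by auto
    next
      assume "\<exists>k \<in> cells K n. e' = act ?E n k e"
      then show "proj ?E n e = proj ?E n e'" using z z' by auto
    qed
  qed
  show ?thesis unfolding is_pbun_def
    by (intro conjI H1 H2 H3 H4 H5 H6 H7 H8 H9 H10)
qed



lemma pb1: "is_pbun K X E \<Longrightarrow> is_sset (tot E)"
  unfolding is_pbun_def by (elim conjE) assumption

lemma pb2: "is_pbun K X E \<Longrightarrow> smap (tot E) X (proj E)"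
  unfolding is_pbun_def by (elim conjE) assumption

lemma pb3A: "is_pbun K X E \<Longrightarrow> \<forall>n k e. k \<in> cells K n \<and> e \<in> cells (tot E) n \<longrightarrow> act E n k e \<in> cells (tot E) n"
  unfolding is_pbun_def by (elim conjE) assumption
lemma pb3: assumes "is_pbun K X E" shows "\<And>n k e. k \<in> cells K n \<Longrightarrow> e \<in> cells (tot E) n \<Longrightarrow> act E n k e \<in> cells (tot E) n"
  using pb3A[OF assms] by simp

lemma pb4A: "is_pbun K X E \<Longrightarrow> \<forall>n e. e \<in> cells (tot E) n \<longrightarrow> act E n (gone K n) e = e"
  unfolding is_pbun_def by (elim conjE) assumption
lemma pb4: assumes "is_pbun K X E" shows "\<And>n e. e \<in> cells (tot E) n \<Longrightarrow> act E n (gone K n) e = e"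
  using pb4A[OF assms] by simp

lemma pb5A: "is_pbun K X E \<Longrightarrow> \<forall>n k h e. k \<in> cells K n \<and> h \<in> cells K n \<and> e \<in> cells (tot E) n \<longrightarrow> act E n (gmul K n k h) e = act E n k (act E n h e)"
  unfolding is_pbun_def by (elim conjE) assumption
lemma pb5: assumes "is_pbun K X E" shows "\<And>n k h e. k \<in> cells K n \<Longrightarrow> h \<in> cells K n \<Longrightarrow> e \<in> cells (tot E) n \<Longrightarrow> act E n (gmul K n k h) e = act E n k (act E n h e)"
  using pb5A[OF assms] by simp

lemma pb6A: "is_pbun K X E \<Longrightarrow> \<forall>n i k e. 1 \<le> n \<and> i \<le> n \<and> k \<in> cells K n \<and> e \<in> cells (tot E) n \<longrightarrow> face (tot E) n i (act E n k e) = act E (n - 1) (face K n i k) (face (tot E) n i e)"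
  unfolding is_pbun_def by (elim conjE) assumption
lemma pb6: assumes "is_pbun K X E" shows "\<And>n i k e. 1 \<le> n \<Longrightarrow> i \<le> n \<Longrightarrow> k \<in> cells K n \<Longrightarrow> e \<in> cells (tot E) n \<Longrightarrow> face (tot E) n i (act E n k e) = act E (n - 1) (face K n i k) (face (tot E) n i e)"
  using pb6A[OF assms] by simp

lemma pb7A: "is_pbun K X E \<Longrightarrow> \<forall>n i k e. i \<le> n \<and> k \<in> cells K n \<and> e \<in> cells (tot E) n \<longrightarrow> degen (tot E) n i (act E n k e) = act E (Suc n) (degen K n i k) (degen (tot E) n i e)"
  unfolding is_pbun_def by (elim conjE) assumption
lemma pb7: assumes "is_pbun K X E" shows "\<And>n i k e. i \<le> n \<Longrightarrow> k \<in> cells K n \<Longrightarrow> e \<in> cells (tot E) n \<Longrightarrow> degen (tot E) n i (act E n k e) = act E (Suc n) (degen K n i k) (degen (tot E) n i e)"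
  using pb7A[OF assms] by simp

lemma pb8A: "is_pbun K X E \<Longrightarrow> \<forall>n k e. k \<in> cells K n \<and> e \<in> cells (tot E) n \<and> act E n k e = e \<longrightarrow> k = gone K n"
  unfolding is_pbun_def by (elim conjE) assumption
lemma pb8: assumes "is_pbun K X E" shows "\<And>n k e. k \<in> cells K n \<Longrightarrow> e \<in> cells (tot E) n \<Longrightarrow> act E n k e = e \<Longrightarrow> k = gone K n"
  using pb8A[OF assms] by blast

lemma pb9A: "is_pbun K X E \<Longrightarrow> \<forall>n. proj E n ` cells (tot E) n = cells X n"
  unfolding is_pbun_def by (elim conjE) assumption
lemma pb9: assumes "is_pbun K X E" shows "proj E n ` cells (tot E) n = cells X n"
  using pb9A[OF assms] by simp

lemma pb10A: "is_pbun K X E \<Longrightarrow> \<forall>n e e'. e \<in> cells (tot E) n \<and> e' \<in> cells (tot E) n \<longrightarrow> (proj E n e = proj E n e' \<longleftrightarrow> (\<exists>k \<in> cells K n. e' = act E n k e))"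
  unfolding is_pbun_def by (elim conjE) assumption
lemma pb10: assumes "is_pbun K X E" shows "\<And>n e e'. e \<in> cells (tot E) n \<Longrightarrow> e' \<in> cells (tot E) n \<Longrightarrow> (proj E n e = proj E n e' \<longleftrightarrow> (\<exists>k \<in> cells K n. e' = act E n k e))"
  using pb10A[OF assms] by simp

lemma sm1A: "smap S T f \<Longrightarrow> \<forall>n x. x \<in> cells S n \<longrightarrow> f n x \<in> cells T n"
  unfolding smap_def by (elim conjE) assumption
lemma sm2A: "smap S T f \<Longrightarrow> \<forall>n i x. 1 \<le> n \<and> i \<le> n \<and> x \<in> cells S n \<longrightarrow> f (n - 1) (face S n i x) = face T n i (f n x)"
  unfolding smap_def by (elim conjE) assumption
lemma sm3A: "smap S T f \<Longrightarrow> \<forall>n i x. i \<le> n \<and> x \<in> cells S n \<longrightarrow> f (Suc n) (degen S n i x) = degen T n i (f n x)"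
  unfolding smap_def by (elim conjE) assumption
lemma sm1: "smap S T f \<Longrightarrow> x \<in> cells S n \<Longrightarrow> f n x \<in> cells T n"
  by (rule sm1A[rule_format])
lemma sm2: assumes "smap S T f" "1 \<le> n" "i \<le> n" "x \<in> cells S n" shows "f (n - 1) (face S n i x) = face T n i (f n x)"
proof -
  have "1 \<le> n \<and> i \<le> n \<and> x \<in> cells S n" using assms by simp
  then show ?thesis using spec[of _ x, OF spec[of _ i, OF spec[of _ n, OF sm2A[OF assms(1)]]]] by (rule mp[rotated])
qed
lemma sm3: "smap S T f \<Longrightarrow> i \<le> n \<Longrightarrow> x \<in> cells S n \<Longrightarrow> f (Suc n) (degen S n i x) = degen T n i (f n x)"
  by (simp add: sm3A[rule_format])

lemma transport:
  fixes F :: "('f, 'k, 'x) pbun" and E :: "('e, 'k, 'x) pbun" and f :: "nat \<Rightarrow> 'f \<Rightarrow> 'e"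
  assumes K: "is_sab_group K" and E: "is_pbun K X E"
  and fc: "\<And>n c. c \<in> cells (tot F) n \<Longrightarrow> f n c \<in> cells (tot E) n"
  and finj: "\<And>n c c'. c \<in> cells (tot F) n \<Longrightarrow> c' \<in> cells (tot F) n \<Longrightarrow> f n c = f n c' \<Longrightarrow> c = c'"
  and fsurj: "\<And>n y. y \<in> cells (tot E) n \<Longrightarrow> \<exists>c \<in> cells (tot F) n. f n c = y"
  and Fface: "\<And>n i c. 1 \<le> n \<Longrightarrow> i \<le> n \<Longrightarrow> c \<in> cells (tot F) n \<Longrightarrow> face (tot F) n i c \<in> cells (tot F) (n - 1)"
  and Fdegen: "\<And>n i c. i \<le> n \<Longrightarrow> c \<in> cells (tot F) n \<Longrightarrow> degen (tot F) n i c \<in> cells (tot F) (Suc n)"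
  and Fact: "\<And>n k c. k \<in> cells K n \<Longrightarrow> c \<in> cells (tot F) n \<Longrightarrow> act F n k c \<in> cells (tot F) n"
  and fface: "\<And>n i c. 1 \<le> n \<Longrightarrow> i \<le> n \<Longrightarrow> c \<in> cells (tot F) n \<Longrightarrow>
      f (n - 1) (face (tot F) n i c) = face (tot E) n i (f n c)"
  and fdegen: "\<And>n i c. i \<le> n \<Longrightarrow> c \<in> cells (tot F) n \<Longrightarrow>
      f (Suc n) (degen (tot F) n i c) = degen (tot E) n i (f n c)"
  and fact: "\<And>n k c. k \<in> cells K n \<Longrightarrow> c \<in> cells (tot F) n \<Longrightarrow> f n (act F n k c) = act E n k (f n c)"
  and fproj: "\<And>n c. c \<in> cells (tot F) n \<Longrightarrow> proj E n (f n c) = proj F n c"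
  shows "bun_iso K X F E f"
proof -
  have SE: "is_sset (tot E)" using pb1[OF E] .
  have SM: "smap (tot E) X (proj E)" using pb2[OF E] .
  have eface: "face (tot E) n i y \<in> cells (tot E) (n - 1)" if "1 \<le> n" "i \<le> n" "y \<in> cells (tot E) n" for n i y
    using face_cl[OF SE that] .
  have edegen: "degen (tot E) n i y \<in> cells (tot E) (Suc n)" if "i \<le> n" "y \<in> cells (tot E) n" for n i y
    using degen_cl[OF SE that] .
  have P1: "\<forall>n i c. 1 \<le> n \<and> i \<le> n \<and> c \<in> cells (tot F) n \<longrightarrow> face (tot F) n i c \<in> cells (tot F) (n - 1)"
    using Fface by blast
  have P2: "\<forall>n i c. i \<le> n \<and> c \<in> cells (tot F) n \<longrightarrow> degen (tot F) n i c \<in> cells (tot F) (Suc n)"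
    using Fdegen by blast
  have P3: "\<forall>n i j c. 2 \<le> n \<and> i < j \<and> j \<le> n \<and> c \<in> cells (tot F) n \<longrightarrow>
        face (tot F) (n - 1) i (face (tot F) n j c) = face (tot F) (n - 1) (j - 1) (face (tot F) n i c)"
  proof (intro allI impI)
    fix n i j c assume H: "2 \<le> n \<and> i < j \<and> j \<le> n \<and> c \<in> cells (tot F) n"
    have n1: "1 \<le> n - 1" "i \<le> n - 1" "j - 1 \<le> n - 1" "1 \<le> n" "j \<le> n" "i \<le> n" using H by auto
    have c: "c \<in> cells (tot F) n" using H by simp
    have d1: "face (tot F) n j c \<in> cells (tot F) (n - 1)" using Fface[OF n1(4) n1(5) c] .
    have d2: "face (tot F) n i c \<in> cells (tot F) (n - 1)" using Fface[OF n1(4) n1(6) c] .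
    have L: "face (tot F) (n - 1) i (face (tot F) n j c) \<in> cells (tot F) (n - 1 - 1)" using Fface[OF n1(1) n1(2) d1] .
    have R: "face (tot F) (n - 1) (j - 1) (face (tot F) n i c) \<in> cells (tot F) (n - 1 - 1)" using Fface[OF n1(1) n1(3) d2] .
    have "f (n - 1 - 1) (face (tot F) (n - 1) i (face (tot F) n j c)) = face (tot E) (n - 1) i (face (tot E) n j (f n c))"
      using fface[OF n1(1) n1(2) d1] fface[OF n1(4) n1(5) c] by simp
    also have "\<dots> = face (tot E) (n - 1) (j - 1) (face (tot E) n i (f n c))"
      using ss3r[OF SE _ _ _ fc[OF c]] H by simp
    also have "\<dots> = f (n - 1 - 1) (face (tot F) (n - 1) (j - 1) (face (tot F) n i c))"
      using fface[OF n1(1) n1(3) d2] fface[OF n1(4) n1(6) c] by simp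
    finally show "face (tot F) (n - 1) i (face (tot F) n j c) = face (tot F) (n - 1) (j - 1) (face (tot F) n i c)"
      using finj[OF L R] by simp
  qed
  have P4: "\<forall>n i j c. i < j \<and> j \<le> n \<and> c \<in> cells (tot F) n \<longrightarrow>
        face (tot F) (Suc n) i (degen (tot F) n j c) = degen (tot F) (n - 1) (j - 1) (face (tot F) n i c)"
  proof (intro allI impI)
    fix n i j c assume H: "i < j \<and> j \<le> n \<and> c \<in> cells (tot F) n"
    obtain m where n: "n = Suc m" using H by (metis less_le_trans not0_implies_Suc not_less0)
    have n1: "1 \<le> Suc n" "i \<le> Suc n" "j \<le> n" "j - 1 \<le> m" "1 \<le> n" "i \<le> n" using H n by auto
    have c: "c \<in> cells (tot F) n" using H by simp
    have d1: "degen (tot F) n j c \<in> cells (tot F) (Suc n)" using Fdegen[OF n1(3) c] .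
    have d2: "face (tot F) n i c \<in> cells (tot F) m" using Fface[OF n1(5) n1(6) c] n by simp
    have L: "face (tot F) (Suc n) i (degen (tot F) n j c) \<in> cells (tot F) n" using Fface[OF n1(1) n1(2) d1] by simp
    have R: "degen (tot F) m (j - 1) (face (tot F) n i c) \<in> cells (tot F) n" using Fdegen[OF n1(4) d2] n by simp
    have "f n (face (tot F) (Suc n) i (degen (tot F) n j c)) = face (tot E) (Suc n) i (degen (tot E) n j (f n c))"
      using fface[OF n1(1) n1(2) d1] fdegen[OF n1(3) c] by simp
    also have "\<dots> = degen (tot E) m (j - 1) (face (tot E) n i (f n c))"
      using ss4r[OF SE _ _ fc[OF c]] H n by simp
    also have "\<dots> = f n (degen (tot F) m (j - 1) (face (tot F) n i c))"
      using fdegen[OF n1(4) d2] fface[OF n1(5) n1(6) c] n by simp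
    finally show "face (tot F) (Suc n) i (degen (tot F) n j c) = degen (tot F) (n - 1) (j - 1) (face (tot F) n i c)"
      using finj[OF L R] n by simp
  qed
  have P5: "\<forall>n j c. j \<le> n \<and> c \<in> cells (tot F) n \<longrightarrow>
        face (tot F) (Suc n) j (degen (tot F) n j c) = c \<and> face (tot F) (Suc n) (Suc j) (degen (tot F) n j c) = c"
  proof (intro allI impI conjI)
    fix n j c assume H: "j \<le> n \<and> c \<in> cells (tot F) n"
    have n1: "1 \<le> Suc n" "j \<le> Suc n" "Suc j \<le> Suc n" "j \<le> n" using H by auto
    have c: "c \<in> cells (tot F) n" using H by simp
    have d1: "degen (tot F) n j c \<in> cells (tot F) (Suc n)" using Fdegen[OF n1(4) c] .
    have L1: "face (tot F) (Suc n) j (degen (tot F) n j c) \<in> cells (tot F) n" using Fface[OF n1(1) n1(2) d1] by simp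
    have L2: "face (tot F) (Suc n) (Suc j) (degen (tot F) n j c) \<in> cells (tot F) n" using Fface[OF n1(1) n1(3) d1] by simp
    have "f n (face (tot F) (Suc n) j (degen (tot F) n j c)) = f n c"
      using fface[OF n1(1) n1(2) d1] fdegen[OF n1(4) c] ss5a[OF SE n1(4) fc[OF c]] by simp
    then show "face (tot F) (Suc n) j (degen (tot F) n j c) = c" using finj[OF L1 c] by simp
    have "f n (face (tot F) (Suc n) (Suc j) (degen (tot F) n j c)) = f n c"
      using fface[OF n1(1) n1(3) d1] fdegen[OF n1(4) c] ss5b[OF SE n1(4) fc[OF c]] by simp
    then show "face (tot F) (Suc n) (Suc j) (degen (tot F) n j c) = c" using finj[OF L2 c] by simp
  qed
  have P6: "\<forall>n i j c. Suc j < i \<and> i \<le> Suc n \<and> c \<in> cells (tot F) n \<longrightarrow>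
        face (tot F) (Suc n) i (degen (tot F) n j c) = degen (tot F) (n - 1) j (face (tot F) n (i - 1) c)"
  proof (intro allI impI)
    fix n i j c assume H: "Suc j < i \<and> i \<le> Suc n \<and> c \<in> cells (tot F) n"
    obtain m where n: "n = Suc m" using H by (metis Suc_lessE Suc_le_mono le_less_trans less_Suc_eq_0_disj not_less0 not0_implies_Suc)
    have n1: "1 \<le> Suc n" "i \<le> Suc n" "j \<le> n" "j \<le> m" "1 \<le> n" "i - 1 \<le> n" using H n by auto
    have c: "c \<in> cells (tot F) n" using H by simp
    have d1: "degen (tot F) n j c \<in> cells (tot F) (Suc n)" using Fdegen[OF n1(3) c] .
    have d2: "face (tot F) n (i - 1) c \<in> cells (tot F) m" using Fface[OF n1(5) n1(6) c] n by simp
    have L: "face (tot F) (Suc n) i (degen (tot F) n j c) \<in> cells (tot F) n" using Fface[OF n1(1) n1(2) d1] by simp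
    have R: "degen (tot F) m j (face (tot F) n (i - 1) c) \<in> cells (tot F) n" using Fdegen[OF n1(4) d2] n by simp
    have "f n (face (tot F) (Suc n) i (degen (tot F) n j c)) = face (tot E) (Suc n) i (degen (tot E) n j (f n c))"
      using fface[OF n1(1) n1(2) d1] fdegen[OF n1(3) c] by simp
    also have "\<dots> = degen (tot E) m j (face (tot E) n (i - 1) (f n c))"
      using ss6r[OF SE _ _ fc[OF c]] H n by simp
    also have "\<dots> = f n (degen (tot F) m j (face (tot F) n (i - 1) c))"
      using fdegen[OF n1(4) d2] fface[OF n1(5) n1(6) c] n by simp
    finally show "face (tot F) (Suc n) i (degen (tot F) n j c) = degen (tot F) (n - 1) j (face (tot F) n (i - 1) c)"
      using finj[OF L R] n by simp
  qed
  have P7: "\<forall>n i j c. i \<le> j \<and> j \<le> n \<and> c \<in> cells (tot F) n \<longrightarrow>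
        degen (tot F) (Suc n) i (degen (tot F) n j c) = degen (tot F) (Suc n) (Suc j) (degen (tot F) n i c)"
  proof (intro allI impI)
    fix n i j c assume H: "i \<le> j \<and> j \<le> n \<and> c \<in> cells (tot F) n"
    have n1: "i \<le> Suc n" "Suc j \<le> Suc n" "j \<le> n" "i \<le> n" using H by auto
    have c: "c \<in> cells (tot F) n" using H by simp
    have d1: "degen (tot F) n j c \<in> cells (tot F) (Suc n)" using Fdegen[OF n1(3) c] .
    have d2: "degen (tot F) n i c \<in> cells (tot F) (Suc n)" using Fdegen[OF n1(4) c] .
    have L: "degen (tot F) (Suc n) i (degen (tot F) n j c) \<in> cells (tot F) (Suc (Suc n))" using Fdegen[OF n1(1) d1] .
    have R: "degen (tot F) (Suc n) (Suc j) (degen (tot F) n i c) \<in> cells (tot F) (Suc (Suc n))" using Fdegen[OF n1(2) d2] .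
    have "f (Suc (Suc n)) (degen (tot F) (Suc n) i (degen (tot F) n j c)) = degen (tot E) (Suc n) i (degen (tot E) n j (f n c))"
      using fdegen[OF n1(1) d1] fdegen[OF n1(3) c] by simp
    also have "\<dots> = degen (tot E) (Suc n) (Suc j) (degen (tot E) n i (f n c))"
      using ss7r[OF SE _ _ fc[OF c]] H by simp
    also have "\<dots> = f (Suc (Suc n)) (degen (tot F) (Suc n) (Suc j) (degen (tot F) n i c))"
      using fdegen[OF n1(2) d2] fdegen[OF n1(4) c] by simp
    finally show "degen (tot F) (Suc n) i (degen (tot F) n j c) = degen (tot F) (Suc n) (Suc j) (degen (tot F) n i c)"
      using finj[OF L R] by simp
  qed
  have SF: "is_sset (tot F)" unfolding is_sset_def
    by (intro conjI P1 P2 P3 P4 P5 P6 P7)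
  have smF: "smap (tot F) X (proj F)"
    unfolding smap_def
  proof (intro conjI allI impI)
    fix n c assume c: "c \<in> cells (tot F) n"
    show "proj F n c \<in> cells X n" using sm1[OF SM fc[OF c]] fproj[OF c] by simp
  next
    fix n i c assume H: "1 \<le> n \<and> i \<le> n \<and> c \<in> cells (tot F) n"
    then have n1: "1 \<le> n" "i \<le> n" and c: "c \<in> cells (tot F) n" by auto
    show "proj F (n - 1) (face (tot F) n i c) = face X n i (proj F n c)"
      using fproj[OF Fface[OF n1 c]] fface[OF n1 c] sm2[OF SM n1 fc[OF c]] fproj[OF c] by simp
  next
    fix n i c assume H: "i \<le> n \<and> c \<in> cells (tot F) n"
    then have n1: "i \<le> n" and c: "c \<in> cells (tot F) n" by auto
    show "proj F (Suc n) (degen (tot F) n i c) = degen X n i (proj F n c)"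
      using fproj[OF Fdegen[OF n1 c]] fdegen[OF n1 c] sm3[OF SM n1 fc[OF c]] fproj[OF c] by simp
  qed
  have H3: "\<forall>n k e. k \<in> cells K n \<and> e \<in> cells (tot F) n \<longrightarrow> act F n k e \<in> cells (tot F) n"
    using Fact by simp
  have H4: "\<forall>n e. e \<in> cells (tot F) n \<longrightarrow> act F n (gone K n) e = e"
  proof (intro allI impI)
    fix n e assume e: "e \<in> cells (tot F) n"
    have "f n (act F n (gone K n) e) = f n e" using fact[OF gone_closed[OF K] e] pb4[OF E fc[OF e]] by simp
    then show "act F n (gone K n) e = e" using finj[OF Fact[OF gone_closed[OF K] e] e] by simp
  qed
  have H5: "\<forall>n k h e. k \<in> cells K n \<and> h \<in> cells K n \<and> e \<in> cells (tot F) n \<longrightarrow>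
        act F n (gmul K n k h) e = act F n k (act F n h e)"
  proof (intro allI impI)
    fix n k h e assume H: "k \<in> cells K n \<and> h \<in> cells K n \<and> e \<in> cells (tot F) n"
    then have k: "k \<in> cells K n" and h: "h \<in> cells K n" and e: "e \<in> cells (tot F) n" by auto
    have kh: "gmul K n k h \<in> cells K n" using K k h by simp
    have "f n (act F n (gmul K n k h) e) = f n (act F n k (act F n h e))"
      using fact[OF kh e] fact[OF k Fact[OF h e]] fact[OF h e] pb5[OF E k h fc[OF e]] by simp
    then show "act F n (gmul K n k h) e = act F n k (act F n h e)"
      using finj[OF Fact[OF kh e] Fact[OF k Fact[OF h e]]] by simp
  qed
  have H6: "\<forall>n i k e. 1 \<le> n \<and> i \<le> n \<and> k \<in> cells K n \<and> e \<in> cells (tot F) n \<longrightarrow>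
        face (tot F) n i (act F n k e) = act F (n - 1) (face K n i k) (face (tot F) n i e)"
  proof (intro allI impI)
    fix n i k e assume H: "1 \<le> n \<and> i \<le> n \<and> k \<in> cells K n \<and> e \<in> cells (tot F) n"
    then have n1: "1 \<le> n" "i \<le> n" and k: "k \<in> cells K n" and e: "e \<in> cells (tot F) n" by auto
    have fk: "face K n i k \<in> cells K (n - 1)" using faceK_cl[OF K n1 k] .
    have a: "act F n k e \<in> cells (tot F) n" using Fact[OF k e] .
    have "f (n - 1) (face (tot F) n i (act F n k e)) = f (n - 1) (act F (n - 1) (face K n i k) (face (tot F) n i e))"
      using fface[OF n1 a] fact[OF k e] pb6[OF E n1 k fc[OF e]] fact[OF fk Fface[OF n1 e]] fface[OF n1 e] by simp
    then show "face (tot F) n i (act F n k e) = act F (n - 1) (face K n i k) (face (tot F) n i e)"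
      using finj[OF Fface[OF n1 a] Fact[OF fk Fface[OF n1 e]]] by simp
  qed
  have H7: "\<forall>n i k e. i \<le> n \<and> k \<in> cells K n \<and> e \<in> cells (tot F) n \<longrightarrow>
        degen (tot F) n i (act F n k e) = act F (Suc n) (degen K n i k) (degen (tot F) n i e)"
  proof (intro allI impI)
    fix n i k e assume H: "i \<le> n \<and> k \<in> cells K n \<and> e \<in> cells (tot F) n"
    then have n1: "i \<le> n" and k: "k \<in> cells K n" and e: "e \<in> cells (tot F) n" by auto
    have fk: "degen K n i k \<in> cells K (Suc n)" using degenK_cl[OF K n1 k] .
    have a: "act F n k e \<in> cells (tot F) n" using Fact[OF k e] .
    have "f (Suc n) (degen (tot F) n i (act F n k e)) = f (Suc n) (act F (Suc n) (degen K n i k) (degen (tot F) n i e))"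
      using fdegen[OF n1 a] fact[OF k e] pb7[OF E n1 k fc[OF e]] fact[OF fk Fdegen[OF n1 e]] fdegen[OF n1 e] by simp
    then show "degen (tot F) n i (act F n k e) = act F (Suc n) (degen K n i k) (degen (tot F) n i e)"
      using finj[OF Fdegen[OF n1 a] Fact[OF fk Fdegen[OF n1 e]]] by simp
  qed
  have H8: "\<forall>n k e. k \<in> cells K n \<and> e \<in> cells (tot F) n \<and> act F n k e = e \<longrightarrow> k = gone K n"
  proof (intro allI impI)
    fix n k e assume H: "k \<in> cells K n \<and> e \<in> cells (tot F) n \<and> act F n k e = e"
    then have k: "k \<in> cells K n" and e: "e \<in> cells (tot F) n" and ee: "act F n k e = e" by auto
    have "act E n k (f n e) = f n e" using fact[OF k e] ee by simp
    then show "k = gone K n" using pb8[OF E k fc[OF e]] by simp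
  qed
  have H9: "\<forall>n. proj F n ` cells (tot F) n = cells X n"
  proof
    fix n
    show "proj F n ` cells (tot F) n = cells X n"
    proof
      show "proj F n ` cells (tot F) n \<subseteq> cells X n"
      proof
        fix y assume "y \<in> proj F n ` cells (tot F) n"
        then obtain c where c: "c \<in> cells (tot F) n" "y = proj F n c" by auto
        show "y \<in> cells X n" using sm1[OF SM fc[OF c(1)]] fproj[OF c(1)] c(2) by simp
      qed
    next
      show "cells X n \<subseteq> proj F n ` cells (tot F) n"
      proof
        fix y assume "y \<in> cells X n"
        then obtain e where e: "e \<in> cells (tot E) n" "y = proj E n e" using pb9[OF E, of n] by auto
        obtain c where c: "c \<in> cells (tot F) n" "f n c = e" using fsurj[OF e(1)] by auto
        show "y \<in> proj F n ` cells (tot F) n" using c e fproj[OF c(1)] by auto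
      qed
    qed
  qed
  have H10: "\<forall>n e e'. e \<in> cells (tot F) n \<and> e' \<in> cells (tot F) n \<longrightarrow>
        (proj F n e = proj F n e' \<longleftrightarrow> (\<exists>k \<in> cells K n. e' = act F n k e))"
  proof (intro allI impI)
    fix n e e' assume H: "e \<in> cells (tot F) n \<and> e' \<in> cells (tot F) n"
    then have e: "e \<in> cells (tot F) n" and e': "e' \<in> cells (tot F) n" by auto
    have "proj F n e = proj F n e' \<longleftrightarrow> proj E n (f n e) = proj E n (f n e')" using fproj[OF e] fproj[OF e'] by simp
    also have "\<dots> \<longleftrightarrow> (\<exists>k \<in> cells K n. f n e' = act E n k (f n e))" using pb10[OF E fc[OF e] fc[OF e']] .
    also have "\<dots> \<longleftrightarrow> (\<exists>k \<in> cells K n. e' = act F n k e)"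
    proof
      assume "\<exists>k \<in> cells K n. f n e' = act E n k (f n e)"
      then obtain k where k: "k \<in> cells K n" "f n e' = act E n k (f n e)" by auto
      then have "f n e' = f n (act F n k e)" using fact[OF k(1) e] by simp
      then have "e' = act F n k e" using finj[OF e' Fact[OF k(1) e]] by simp
      then show "\<exists>k \<in> cells K n. e' = act F n k e" using k(1) by auto
    next
      assume "\<exists>k \<in> cells K n. e' = act F n k e"
      then show "\<exists>k \<in> cells K n. f n e' = act E n k (f n e)" using fact[OF _ e] by auto
    qed
    finally show "proj F n e = proj F n e' \<longleftrightarrow> (\<exists>k \<in> cells K n. e' = act F n k e)" .
  qed
  have PF: "is_pbun K X F" unfolding is_pbun_def
    by (intro conjI SF smF H3 H4 H5 H6 H7 H8 H9 H10)
  have hom: "bun_hom K X F E f"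
    unfolding bun_hom_def smap_def
  proof (intro conjI allI impI)
    fix n c assume "c \<in> cells (tot F) n" then show "f n c \<in> cells (tot E) n" by (rule fc)
  next
    fix n i c assume H: "1 \<le> n \<and> i \<le> n \<and> c \<in> cells (tot F) n"
    then show "f (n - 1) (face (tot F) n i c) = face (tot E) n i (f n c)" using fface by simp
  next
    fix n i c assume H: "i \<le> n \<and> c \<in> cells (tot F) n"
    then show "f (Suc n) (degen (tot F) n i c) = degen (tot E) n i (f n c)" using fdegen by simp
  next
    fix n k c assume H: "k \<in> cells K n \<and> c \<in> cells (tot F) n"
    then show "f n (act F n k c) = act E n k (f n c)" using fact by simp
  next
    fix n c assume H: "c \<in> cells (tot F) n"
    then show "proj E n (f n c) = proj F n c" using fproj by simp
  qed
  define g where "g = (\<lambda>n y. SOME c. c \<in> cells (tot F) n \<and> f n c = y)"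
  have g: "g n y \<in> cells (tot F) n \<and> f n (g n y) = y" if "y \<in> cells (tot E) n" for n y
    unfolding g_def using someI_ex[OF fsurj[OF that, unfolded Bex_def]] .
  have gf: "g n (f n c) = c" if "c \<in> cells (tot F) n" for n c
  proof -
    have a: "g n (f n c) \<in> cells (tot F) n" "f n (g n (f n c)) = f n c" using g[OF fc[OF that]] by auto
    show ?thesis using finj[OF a(1) that a(2)] .
  qed
  have ghom: "bun_hom K X E F g"
    unfolding bun_hom_def smap_def
  proof (intro conjI allI impI)
    fix n y assume y: "y \<in> cells (tot E) n" then show "g n y \<in> cells (tot F) n" using g[OF y] by simp
  next
    fix n i y assume H: "1 \<le> n \<and> i \<le> n \<and> y \<in> cells (tot E) n"
    then have n1: "1 \<le> n" "i \<le> n" and y: "y \<in> cells (tot E) n" by auto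
    have gy: "g n y \<in> cells (tot F) n" "f n (g n y) = y" using g[OF y] by auto
    have "f (n - 1) (g (n - 1) (face (tot E) n i y)) = f (n - 1) (face (tot F) n i (g n y))"
      using g[OF eface[OF n1 y]] fface[OF n1 gy(1)] gy(2) by simp
    then show "g (n - 1) (face (tot E) n i y) = face (tot F) n i (g n y)"
    proof -
      have A: "g (n - 1) (face (tot E) n i y) \<in> cells (tot F) (n - 1)" using g[OF eface[OF n1 y]] by simp
      show ?thesis using finj[OF A Fface[OF n1 gy(1)]] \<open>f (n - 1) (g (n - 1) (face (tot E) n i y)) = f (n - 1) (face (tot F) n i (g n y))\<close> by simp
    qed
  next
    fix n i y assume H: "i \<le> n \<and> y \<in> cells (tot E) n"
    then have n1: "i \<le> n" and y: "y \<in> cells (tot E) n" by auto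
    have gy: "g n y \<in> cells (tot F) n" "f n (g n y) = y" using g[OF y] by auto
    have "f (Suc n) (g (Suc n) (degen (tot E) n i y)) = f (Suc n) (degen (tot F) n i (g n y))"
      using g[OF edegen[OF n1 y]] fdegen[OF n1 gy(1)] gy(2) by simp
    then show "g (Suc n) (degen (tot E) n i y) = degen (tot F) n i (g n y)"
    proof -
      have A: "g (Suc n) (degen (tot E) n i y) \<in> cells (tot F) (Suc n)" using g[OF edegen[OF n1 y]] by simp
      show ?thesis using finj[OF A Fdegen[OF n1 gy(1)]] \<open>f (Suc n) (g (Suc n) (degen (tot E) n i y)) = f (Suc n) (degen (tot F) n i (g n y))\<close> by simp
    qed
  next
    fix n k y assume H: "k \<in> cells K n \<and> y \<in> cells (tot E) n"
    then have k: "k \<in> cells K n" and y: "y \<in> cells (tot E) n" by auto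
    have gy: "g n y \<in> cells (tot F) n" "f n (g n y) = y" using g[OF y] by auto
    have a: "act E n k y \<in> cells (tot E) n" using pb3[OF E k y] .
    have "f n (g n (act E n k y)) = f n (act F n k (g n y))"
      using g[OF a] fact[OF k gy(1)] gy(2) by simp
    then show "g n (act E n k y) = act F n k (g n y)"
    proof -
      have A: "g n (act E n k y) \<in> cells (tot F) n" using g[OF a] by simp
      show ?thesis using finj[OF A Fact[OF k gy(1)]] \<open>f n (g n (act E n k y)) = f n (act F n k (g n y))\<close> by simp
    qed
  next
    fix n y assume y: "y \<in> cells (tot E) n"
    have gy: "g n y \<in> cells (tot F) n" "f n (g n y) = y" using g[OF y] by auto
    show "proj F n (g n y) = proj E n y" using fproj[OF gy(1)] gy(2) by simp
  qed
  have gf': "\<forall>n e. e \<in> cells (tot F) n \<longrightarrow> g n (f n e) = e" using gf by simp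
  have fg': "\<forall>n y. y \<in> cells (tot E) n \<longrightarrow> f n (g n y) = y" using g by simp
  show ?thesis unfolding bun_iso_def
    by (intro conjI PF E hom exI[of _ g] ghom gf' fg')
qed



section \<open>Generic facts about the tensor quotient\<close>

lemma trel_equiv: "equiv UNIV (trel K E F n)"
proof -
  have "refl (trel K E F n)" unfolding trel_def refl_on_def by simp
  moreover have "sym (trel K E F n)" unfolding trel_def by (intro sym_rtrancl sym_Un_converse)
  moreover have "trans (trel K E F n)" unfolding trel_def by (rule trans_rtrancl)
  ultimately show ?thesis by (simp add: equiv_def)
qed

lemma tcls_self: "p \<in> tcls K E F n p"
  by (simp add: tcls_def trel_def)

lemma trel_fib:
  assumes "(p, q) \<in> trel K E F n" "p \<in> fibprod E F n"
  shows "q \<in> fibprod E F n"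
  using assms(1,2) unfolding trel_def
proof (induction rule: rtrancl_induct)
  case base then show ?case .
next
  case (step y z)
  then show ?case unfolding tgen_def by auto
qed

lemma trel_inv:
  assumes inv: "\<And>a b. (a, b) \<in> tgen K E F n \<Longrightarrow> I a = I b"
  and "(p, q) \<in> trel K E F n"
  shows "I p = I q"
  using assms(2) unfolding trel_def
proof (induction rule: rtrancl_induct)
  case base then show ?case by simp
next
  case (step y z)
  then show ?case using inv[of y z] inv[of z y] by auto
qed

lemma trep_tcls:
  "(p, trep (tcls K E F n p)) \<in> trel K E F n"
proof -
  have "trep (tcls K E F n p) \<in> tcls K E F n p"
    unfolding trep_def using tcls_self[of p K E F n] by (rule someI)
  then show ?thesis by (simp add: tcls_def)
qed

lemma tcls_eq: "(p, q) \<in> trel K E F n \<Longrightarrow> tcls K E F n p = tcls K E F n q"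
  unfolding tcls_def by (rule equiv_class_eq[OF trel_equiv])

lemma tensor_cells: "cells (tot (tensor K E F)) n = fibprod E F n // trel K E F n"
  by (simp add: tensor_def)

lemma tensor_cellsE:
  assumes "c \<in> cells (tot (tensor K E F)) n"
  obtains p where "p \<in> fibprod E F n" "c = tcls K E F n p"
proof -
  have "\<exists>p \<in> fibprod E F n. c = tcls K E F n p" using assms unfolding tensor_cells quotient_def tcls_def by simp
  then show ?thesis using that by auto
qed

lemma tensor_cellsI: "p \<in> fibprod E F n \<Longrightarrow> tcls K E F n p \<in> cells (tot (tensor K E F)) n"
  unfolding tensor_cells quotient_def tcls_def by auto

lemma tensor_trep:
  assumes "c \<in> cells (tot (tensor K E F)) n"
  shows "trep c \<in> fibprod E F n" "c = tcls K E F n (trep c)"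
proof -
  obtain p where p: "p \<in> fibprod E F n" "c = tcls K E F n p" using tensor_cellsE[OF assms] .
  show "trep c \<in> fibprod E F n" using trel_fib[OF trep_tcls p(1)] p(2) by simp
  show "c = tcls K E F n (trep c)" using tcls_eq[OF trep_tcls[of p K E F n]] p(2) by simp
qed

lemma tensor_face: "face (tot (tensor K E F)) n i c = tcls K E F (n - 1)
                (face (tot E) n i (fst (trep c)), face (tot F) n i (snd (trep c)))"
  by (simp add: tensor_def)
lemma tensor_degen: "degen (tot (tensor K E F)) n i c = tcls K E F (Suc n)
                (degen (tot E) n i (fst (trep c)), degen (tot F) n i (snd (trep c)))"
  by (simp add: tensor_def)
lemma tensor_act: "act (tensor K E F) n k c = tcls K E F n (act E n k (fst (trep c)), snd (trep c))"
  by (simp add: tensor_def)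
lemma tensor_proj: "proj (tensor K E F) n c = proj E n (fst (trep c))"
  by (simp add: tensor_def)

section \<open>Tensor of twisted bundles\<close>

definition pm :: "'k sgrp \<Rightarrow> nat \<Rightarrow> ('k \<times> 'x) \<times> ('k \<times> 'x) \<Rightarrow> 'k \<times> 'x" where
  "pm K n p = (gmul K n (fst (fst p)) (fst (snd p)), snd (fst p))"

lemma phi_pm: "phi K n c = pm K n (trep c)"
  by (simp add: phi_def pm_def)

lemma fib_tw: "((g, x), (h, y)) \<in> fibprod (tw_bun K X \<eta>) (tw_bun K X \<xi>) n \<longleftrightarrow>
   g \<in> cells K n \<and> x \<in> cells X n \<and> h \<in> cells K n \<and> y \<in> cells X n \<and> x = y"
  by (auto simp add: fibprod_def)

lemma fib_twE:
  assumes "p \<in> fibprod (tw_bun K X \<eta>) (tw_bun K X \<xi>) n"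
  obtains g h x where "p = ((g, x), (h, x))" "g \<in> cells K n" "h \<in> cells K n" "x \<in> cells X n"
proof -
  obtain g x h y where "p = ((g, x), (h, y))" by (metis prod.collapse)
  moreover have "g \<in> cells K n \<and> x \<in> cells X n \<and> h \<in> cells K n \<and> y \<in> cells X n \<and> x = y"
    using assms calculation fib_tw by metis
  ultimately show ?thesis using that by blast
qed

lemma tgen_tw:
  assumes K: "is_sab_group K" and ab: "(a, b) \<in> tgen K (tw_bun K X \<eta>) (tw_bun K X \<xi>) n"
  shows "pm K n a = pm K n b"
proof -
  obtain k e f where abk: "a = (act (tw_bun K X \<eta>) n k e, f)" "b = (e, act (tw_bun K X \<xi>) n k f)"
      "k \<in> cells K n" "(e, f) \<in> fibprod (tw_bun K X \<eta>) (tw_bun K X \<xi>) n"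
  proof -
    have "\<exists>k e f. a = (act (tw_bun K X \<eta>) n k e, f) \<and> b = (e, act (tw_bun K X \<xi>) n k f) \<and>
      k \<in> cells K n \<and> (e, f) \<in> fibprod (tw_bun K X \<eta>) (tw_bun K X \<xi>) n"
      using ab unfolding tgen_def by (simp only: mem_Collect_eq prod.inject) metis
    then show ?thesis using that by metis
  qed
  obtain g h x where ef: "(e, f) = ((g, x), (h, x))" "g \<in> cells K n" "h \<in> cells K n" "x \<in> cells X n"
    using fib_twE[OF abk(4)] .
  have "gmul K n (gmul K n k g) h = gmul K n g (gmul K n k h)"
    using gassoc[OF K abk(3) ef(2) ef(3)] gassoc[OF K ef(2) abk(3) ef(3)] gcomm[OF K abk(3) ef(2)] by simp
  then show ?thesis using abk ef by (simp add: pm_def)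
qed

lemma tcls_tw:
  assumes K: "is_sab_group K" and p: "p \<in> fibprod (tw_bun K X \<eta>) (tw_bun K X \<xi>) n"
  shows "tcls K (tw_bun K X \<eta>) (tw_bun K X \<xi>) n p =
         {q \<in> fibprod (tw_bun K X \<eta>) (tw_bun K X \<xi>) n. pm K n q = pm K n p}"
proof
  show "tcls K (tw_bun K X \<eta>) (tw_bun K X \<xi>) n p \<subseteq> {q \<in> fibprod (tw_bun K X \<eta>) (tw_bun K X \<xi>) n. pm K n q = pm K n p}"
  proof
    fix q assume "q \<in> tcls K (tw_bun K X \<eta>) (tw_bun K X \<xi>) n p"
    then have pq: "(p, q) \<in> trel K (tw_bun K X \<eta>) (tw_bun K X \<xi>) n" by (simp add: tcls_def)
    show "q \<in> {q \<in> fibprod (tw_bun K X \<eta>) (tw_bun K X \<xi>) n. pm K n q = pm K n p}"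
      using trel_fib[OF pq p] trel_inv[where I="pm K n", OF tgen_tw[OF K] pq] by simp
  qed
next
  show "{q \<in> fibprod (tw_bun K X \<eta>) (tw_bun K X \<xi>) n. pm K n q = pm K n p} \<subseteq> tcls K (tw_bun K X \<eta>) (tw_bun K X \<xi>) n p"
  proof
    fix q assume q: "q \<in> {q \<in> fibprod (tw_bun K X \<eta>) (tw_bun K X \<xi>) n. pm K n q = pm K n p}"
    obtain g h x where pp: "p = ((g, x), (h, x))" "g \<in> cells K n" "h \<in> cells K n" "x \<in> cells X n"
      using fib_twE[OF p] .
    have qf: "q \<in> fibprod (tw_bun K X \<eta>) (tw_bun K X \<xi>) n" using q by simp
    obtain g' h' x' where qq: "q = ((g', x'), (h', x'))" "g' \<in> cells K n" "h' \<in> cells K n" "x' \<in> cells X n"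
      using fib_twE[OF qf] .
    have eq: "gmul K n g' h' = gmul K n g h" "x' = x" using q pp qq by (auto simp add: pm_def)
    obtain k where k: "k \<in> cells K n" "g' = gmul K n k g" using gsolve[OF K pp(2) qq(2)] by auto
    have kh: "gmul K n k h' = h"
    proof -
      have "gmul K n g (gmul K n k h') = gmul K n g' h'"
        using gassoc[OF K k(1) pp(2) qq(3)] gassoc[OF K pp(2) k(1) qq(3)] gcomm[OF K k(1) pp(2)] k(2) by simp
      also have "\<dots> = gmul K n g h" using eq by simp
      finally show ?thesis using glcancel[OF K pp(2) _ pp(3)] K k(1) qq(3) by simp
    qed
    have "(q, p) \<in> tgen K (tw_bun K X \<eta>) (tw_bun K X \<xi>) n"
      unfolding tgen_def
      apply (rule CollectI)
      apply (rule exI[of _ k], rule exI[of _ "(g, x)"], rule exI[of _ "(h', x)"])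
      using k qq pp eq kh K by (simp add: fib_tw)
    then have "(p, q) \<in> trel K (tw_bun K X \<eta>) (tw_bun K X \<xi>) n"
      unfolding trel_def by (intro r_into_rtrancl) simp
    then show "q \<in> tcls K (tw_bun K X \<eta>) (tw_bun K X \<xi>) n p" by (simp add: tcls_def)
  qed
qed

lemma phi_tcls_tw:
  assumes K: "is_sab_group K" and p: "p \<in> fibprod (tw_bun K X \<eta>) (tw_bun K X \<xi>) n"
  shows "phi K n (tcls K (tw_bun K X \<eta>) (tw_bun K X \<xi>) n p) = pm K n p"
proof -
  have "trep (tcls K (tw_bun K X \<eta>) (tw_bun K X \<xi>) n p) \<in> tcls K (tw_bun K X \<eta>) (tw_bun K X \<xi>) n p"
    using trep_tcls[of p K] by (simp add: tcls_def)
  then show ?thesis unfolding phi_pm using tcls_tw[OF K p] by simp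
qed



lemma tw_snd_face: "snd (face (tw_sset K X \<eta>) n i (g, x)) = face X n i x"
  by (cases "i = 0") simp_all

lemma tw_fst_face_cl:
  assumes "is_twisting K X \<eta>" "1 \<le> n" "i \<le> n" "g \<in> cells K n" "x \<in> cells X n"
  shows "fst (face (tw_sset K X \<eta>) n i (g, x)) \<in> cells K (n - 1)"
proof -
  have S: "is_sset (tw_sset K X \<eta>)" using assms(1) by (simp add: is_twisting_def)
  have "face (tw_sset K X \<eta>) n i (g, x) \<in> cells (tw_sset K X \<eta>) (n - 1)"
    using face_cl[OF S assms(2,3)] assms(4,5) by simp
  then show ?thesis by auto
qed

lemma tw_tensor_iso:
  assumes K: "is_sab_group K" and X: "is_sset X" and T1: "is_twisting K X \<eta>" and T2: "is_twisting K X \<xi>"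
  shows "bun_iso K X (tensor K (tw_bun K X \<eta>) (tw_bun K X \<xi>)) (tw_bun K X (tw_mult K \<eta> \<xi>)) (phi K)"
proof -
  let ?A = "tw_bun K X \<eta>" and ?B = "tw_bun K X \<xi>" and ?C = "tw_bun K X (tw_mult K \<eta> \<xi>)"
  let ?F = "tensor K ?A ?B"
  have c1: "twc K X \<eta>" "twc K X \<xi>" using twisting_twc[OF K X] T1 T2 by auto
  have TC: "is_twisting K X (tw_mult K \<eta> \<xi>)" using twc_twisting[OF K X twc_mult[OF K X c1]] .
  have E: "is_pbun K X ?C" using tw_pbun[OF K X TC] .
  have repF: "\<exists>g h x. trep c = ((g, x), (h, x)) \<and> g \<in> cells K n \<and> h \<in> cells K n \<and> x \<in> cells X n"
    if cF: "c \<in> cells (tot ?F) n" for c n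
  proof -
    obtain g h x where "trep c = ((g, x), (h, x))" "g \<in> cells K n" "h \<in> cells K n" "x \<in> cells X n"
      using fib_twE[OF tensor_trep(1)[OF cF]] .
    then show ?thesis by blast
  qed
  have phic: "phi K n c = pm K n (trep c)" for n c by (rule phi_pm)
  have fc: "phi K n c \<in> cells (tot ?C) n" if "c \<in> cells (tot ?F) n" for n c
    using repF[OF that] K by (auto simp add: phi_pm pm_def)
  have finj: "c = c'" if "c \<in> cells (tot ?F) n" "c' \<in> cells (tot ?F) n" "phi K n c = phi K n c'" for n c c'
  proof -
    have "c = tcls K ?A ?B n (trep c)" "c' = tcls K ?A ?B n (trep c')"
      using tensor_trep(2)[OF that(1)] tensor_trep(2)[OF that(2)] by auto
    moreover have "pm K n (trep c) = pm K n (trep c')" using that(3) by (simp add: phi_pm)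
    ultimately show ?thesis using tcls_tw[OF K tensor_trep(1)[OF that(1)]] tcls_tw[OF K tensor_trep(1)[OF that(2)]]
      by simp
  qed
  have fsurj: "\<exists>c \<in> cells (tot ?F) n. phi K n c = y" if "y \<in> cells (tot ?C) n" for n y
  proof -
    have yy: "y \<in> cells K n \<times> cells X n" using that by simp
    obtain g x where y: "y = (g, x)" "g \<in> cells K n" "x \<in> cells X n" using yy by auto
    let ?p = "((g, x), (gone K n, x))"
    have p: "?p \<in> fibprod ?A ?B n" using y K by (simp add: fib_tw)
    have "phi K n (tcls K ?A ?B n ?p) = y" using phi_tcls_tw[OF K p] y K by (simp add: pm_def)
    then show ?thesis using tensor_cellsI[OF p] by blast
  qed
  have facep: "(face (tw_sset K X \<eta>) n i (g, x), face (tw_sset K X \<xi>) n i (h, x)) \<in> fibprod ?A ?B (n - 1)"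
    if "1 \<le> n" "i \<le> n" "g \<in> cells K n" "h \<in> cells K n" "x \<in> cells X n" for n i g h x
  proof -
    have "face (tw_sset K X \<eta>) n i (g, x) = (fst (face (tw_sset K X \<eta>) n i (g, x)), face X n i x)"
      by (metis prod.collapse tw_snd_face)
    moreover have "face (tw_sset K X \<xi>) n i (h, x) = (fst (face (tw_sset K X \<xi>) n i (h, x)), face X n i x)"
      by (metis prod.collapse tw_snd_face)
    ultimately show ?thesis
      using tw_fst_face_cl[OF T1 that(1,2,3,5)] tw_fst_face_cl[OF T2 that(1,2,4,5)] face_cl[OF X that(1,2,5)]
      by (metis fib_tw)
  qed
  have degenp: "(degen (tw_sset K X \<eta>) n i (g, x), degen (tw_sset K X \<xi>) n i (h, x)) \<in> fibprod ?A ?B (Suc n)"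
    if "i \<le> n" "g \<in> cells K n" "h \<in> cells K n" "x \<in> cells X n" for n i g h x
    using that degen_cl[OF X] K by (simp add: fib_tw)
  have actp: "(act ?A n k (g, x), (h, x)) \<in> fibprod ?A ?B n"
    if "k \<in> cells K n" "g \<in> cells K n" "h \<in> cells K n" "x \<in> cells X n" for n k g h x
    using that K by (simp add: fib_tw)
  have Fface: "face (tot ?F) n i c \<in> cells (tot ?F) (n - 1)" if "1 \<le> n" "i \<le> n" "c \<in> cells (tot ?F) n" for n i c
  proof -
    have rr: "\<exists>g h x. trep c = ((g, x), (h, x)) \<and> g \<in> cells K n \<and> h \<in> cells K n \<and> x \<in> cells X n" using repF[OF that(3)] .
    obtain g h x where r: "trep c = ((g, x), (h, x))" "g \<in> cells K n" "h \<in> cells K n" "x \<in> cells X n"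
      using rr by blast
    show ?thesis unfolding tensor_face using r tensor_cellsI[OF facep[OF that(1,2) r(2,3,4)]] by simp
  qed
  have Fdegen: "degen (tot ?F) n i c \<in> cells (tot ?F) (Suc n)" if "i \<le> n" "c \<in> cells (tot ?F) n" for n i c
  proof -
    have rr: "\<exists>g h x. trep c = ((g, x), (h, x)) \<and> g \<in> cells K n \<and> h \<in> cells K n \<and> x \<in> cells X n" using repF[OF that(2)] .
    obtain g h x where r: "trep c = ((g, x), (h, x))" "g \<in> cells K n" "h \<in> cells K n" "x \<in> cells X n"
      using rr by blast
    show ?thesis unfolding tensor_degen using r tensor_cellsI[OF degenp[OF that(1) r(2,3,4)]] by simp
  qed
  have Fact: "act ?F n k c \<in> cells (tot ?F) n" if "k \<in> cells K n" "c \<in> cells (tot ?F) n" for n k c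
  proof -
    have rr: "\<exists>g h x. trep c = ((g, x), (h, x)) \<and> g \<in> cells K n \<and> h \<in> cells K n \<and> x \<in> cells X n" using repF[OF that(2)] .
    obtain g h x where r: "trep c = ((g, x), (h, x))" "g \<in> cells K n" "h \<in> cells K n" "x \<in> cells X n"
      using rr by blast
    show ?thesis unfolding tensor_act using r tensor_cellsI[OF actp[OF that(1) r(2,3,4)]] by simp
  qed
  have fface: "phi K (n - 1) (face (tot ?F) n i c) = face (tot ?C) n i (phi K n c)"
    if "1 \<le> n" "i \<le> n" "c \<in> cells (tot ?F) n" for n i c
  proof -
    have rr: "\<exists>g h x. trep c = ((g, x), (h, x)) \<and> g \<in> cells K n \<and> h \<in> cells K n \<and> x \<in> cells X n" using repF[OF that(3)] .
    obtain g h x where r: "trep c = ((g, x), (h, x))" "g \<in> cells K n" "h \<in> cells K n" "x \<in> cells X n"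
      using rr by blast
    have L: "phi K (n - 1) (face (tot ?F) n i c) = pm K (n - 1) (face (tw_sset K X \<eta>) n i (g, x), face (tw_sset K X \<xi>) n i (h, x))"
      unfolding tensor_face using r phi_tcls_tw[OF K facep[OF that(1,2) r(2,3,4)]] by simp
    have R: "face (tot ?C) n i (phi K n c) = face (tw_sset K X (tw_mult K \<eta> \<xi>)) n i (gmul K n g h, x)"
      using r by (simp add: phi_pm pm_def)
    have fg: "face K n i g \<in> cells K (n - 1)" "face K n i h \<in> cells K (n - 1)"
      using faceK_cl[OF K that(1,2)] r by auto
    have ex: "\<eta> n x \<in> cells K (n - 1)" "\<xi> n x \<in> cells K (n - 1)" using twcC'[OF c1(1) that(1) r(4)] twcC'[OF c1(2) that(1) r(4)] by auto
    show ?thesis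
    proof (cases "i = 0")
      case True
      then show ?thesis unfolding L R using face_mul[OF K that(1,2) r(2,3)] gswap[OF K fg(1) ex(1) fg(2) ex(2)]
        by (simp add: pm_def tw_mult_def)
    next
      case False
      then show ?thesis unfolding L R using face_mul[OF K that(1,2) r(2,3)] by (simp add: pm_def)
    qed
  qed
  have fdegen: "phi K (Suc n) (degen (tot ?F) n i c) = degen (tot ?C) n i (phi K n c)"
    if "i \<le> n" "c \<in> cells (tot ?F) n" for n i c
  proof -
    have rr: "\<exists>g h x. trep c = ((g, x), (h, x)) \<and> g \<in> cells K n \<and> h \<in> cells K n \<and> x \<in> cells X n" using repF[OF that(2)] .
    obtain g h x where r: "trep c = ((g, x), (h, x))" "g \<in> cells K n" "h \<in> cells K n" "x \<in> cells X n"
      using rr by blast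
    have L: "phi K (Suc n) (degen (tot ?F) n i c) = pm K (Suc n) (degen (tw_sset K X \<eta>) n i (g, x), degen (tw_sset K X \<xi>) n i (h, x))"
      unfolding tensor_degen using r phi_tcls_tw[OF K degenp[OF that(1) r(2,3,4)]] by simp
    show ?thesis unfolding L using r degen_mul[OF K that(1) r(2,3)] by (simp add: pm_def phi_pm)
  qed
  have fact: "phi K n (act ?F n k c) = act ?C n k (phi K n c)" if "k \<in> cells K n" "c \<in> cells (tot ?F) n" for n k c
  proof -
    have rr: "\<exists>g h x. trep c = ((g, x), (h, x)) \<and> g \<in> cells K n \<and> h \<in> cells K n \<and> x \<in> cells X n" using repF[OF that(2)] .
    obtain g h x where r: "trep c = ((g, x), (h, x))" "g \<in> cells K n" "h \<in> cells K n" "x \<in> cells X n"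
      using rr by blast
    have L: "phi K n (act ?F n k c) = pm K n (act ?A n k (g, x), (h, x))"
      unfolding tensor_act using r phi_tcls_tw[OF K actp[OF that(1) r(2,3,4)]] by simp
    show ?thesis unfolding L using r gassoc[OF K that(1) r(2,3)] by (simp add: pm_def phi_pm)
  qed
  have fproj: "proj ?C n (phi K n c) = proj ?F n c" if "c \<in> cells (tot ?F) n" for n c
  proof -
    have rr: "\<exists>g h x. trep c = ((g, x), (h, x)) \<and> g \<in> cells K n \<and> h \<in> cells K n \<and> x \<in> cells X n" using repF[OF that] .
    obtain g h x where r: "trep c = ((g, x), (h, x))" "g \<in> cells K n" "h \<in> cells K n" "x \<in> cells X n"
      using rr by blast
    show ?thesis using r by (simp add: pm_def phi_pm tensor_proj)
  qed
  show ?thesis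
    by (rule transport[OF K E fc finj fsurj Fface Fdegen Fact fface fdegen fact fproj])
qed



lemma pb_tot_cells[simp]: "cells (tot (prod_bun K X)) n = cells K n \<times> cells X n"
  by (simp add: prod_bun_def)
lemma pb_tot_face[simp]: "face (tot (prod_bun K X)) n i (g, x) = (face K n i g, face X n i x)"
  by (simp add: prod_bun_def)
lemma pb_tot_degen[simp]: "degen (tot (prod_bun K X)) n i (g, x) = (degen K n i g, degen X n i x)"
  by (simp add: prod_bun_def)
lemma pb_act[simp]: "act (prod_bun K X) n k (g, x) = (gmul K n k g, x)"
  by (simp add: prod_bun_def)
lemma pb_proj[simp]: "proj (prod_bun K X) n z = snd z"
  by (simp add: prod_bun_def)

lemma prod_iso:
  assumes K: "is_sab_group K" and X: "is_sset X"
  shows "bun_iso K X (prod_bun K X) (tw_bun K X (tw_one K)) (\<lambda>n z. z)"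
proof -
  let ?F = "prod_bun K X" and ?E = "tw_bun K X (tw_one K)"
  have T: "is_twisting K X (tw_one K)" using twc_twisting[OF K X twc_one[OF K]] .
  have E: "is_pbun K X ?E" using tw_pbun[OF K X T] .
  show ?thesis
  proof (rule transport[OF K E])
    fix n c assume "c \<in> cells (tot ?F) n" then show "c \<in> cells (tot ?E) n" by simp
  next
    fix n c c' assume "c = c'" then show "c = c'" .
  next
    fix n y assume "y \<in> cells (tot ?E) n" then show "\<exists>c \<in> cells (tot ?F) n. c = y" by simp
  next
    fix n i c assume H: "1 \<le> n" "i \<le> n" "c \<in> cells (tot ?F) n"
    obtain g x where z: "c = (g, x)" by fastforce
    show "face (tot ?F) n i c \<in> cells (tot ?F) (n - 1)" using z H faceK_cl[OF K] face_cl[OF X] by auto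
  next
    fix n i c assume H: "i \<le> n" "c \<in> cells (tot ?F) n"
    obtain g x where z: "c = (g, x)" by fastforce
    show "degen (tot ?F) n i c \<in> cells (tot ?F) (Suc n)" using z H K degen_cl[OF X] by auto
  next
    fix n k c assume H: "k \<in> cells K n" "c \<in> cells (tot ?F) n"
    obtain g x where z: "c = (g, x)" by fastforce
    show "act ?F n k c \<in> cells (tot ?F) n" using z H K by auto
  next
    fix n i c assume H: "1 \<le> n" "i \<le> n" "c \<in> cells (tot ?F) n"
    obtain g x where z: "c = (g, x)" by fastforce
    have g: "face K n i g \<in> cells K (n - 1)" using faceK_cl[OF K H(1,2)] H(3) z by auto
    show "face (tot ?F) n i c = face (tot ?E) n i c"
      using z g K by (cases "i = 0") (simp_all add: tw_one_def)
  next
    fix n i c assume H: "i \<le> n" "c \<in> cells (tot ?F) n"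
    obtain g x where z: "c = (g, x)" by fastforce
    show "degen (tot ?F) n i c = degen (tot ?E) n i c" using z by simp
  next
    fix n k c assume H: "k \<in> cells K n" "c \<in> cells (tot ?F) n"
    obtain g x where z: "c = (g, x)" by fastforce
    show "act ?F n k c = act ?E n k c" using z by simp
  next
    fix n c assume H: "c \<in> cells (tot ?F) n"
    show "proj ?E n c = proj ?F n c" by simp
  qed
qed

lemma braid_coh:
  assumes K: "is_sab_group K" and c: "c \<in> cells (tot (tensor K (tw_bun K X \<eta>) (tw_bun K X \<xi>))) n"
  shows "phi K n (braidB K (tw_bun K X \<eta>) (tw_bun K X \<xi>) n c) = phi K n c"
proof -
  obtain g h x where r: "trep c = ((g, x), (h, x))" "g \<in> cells K n" "h \<in> cells K n" "x \<in> cells X n"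
    using fib_twE[OF tensor_trep(1)[OF c]] .
  have p: "((h, x), (g, x)) \<in> fibprod (tw_bun K X \<xi>) (tw_bun K X \<eta>) n" using r by (simp add: fib_tw)
  show ?thesis unfolding braidB_def using r phi_tcls_tw[OF K p] gcomm[OF K r(2,3)]
    by (simp add: phi_pm pm_def)
qed

lemma fib_pt: "((g, x), (h, y)) \<in> fibprod (prod_bun K X) (tw_bun K X \<eta>) n \<longleftrightarrow>
   g \<in> cells K n \<and> x \<in> cells X n \<and> h \<in> cells K n \<and> y \<in> cells X n \<and> x = y"
  by (auto simp add: fibprod_def)
lemma fib_tp: "((g, x), (h, y)) \<in> fibprod (tw_bun K X \<eta>) (prod_bun K X) n \<longleftrightarrow>
   g \<in> cells K n \<and> x \<in> cells X n \<and> h \<in> cells K n \<and> y \<in> cells X n \<and> x = y"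
  by (auto simp add: fibprod_def)

lemma lunit_coh:
  assumes K: "is_sab_group K" and c: "c \<in> cells (tot (tensor K (prod_bun K X) (tw_bun K X \<eta>))) n"
  shows "phi K n (tmap K (tw_bun K X (tw_one K)) (tw_bun K X \<eta>) (\<lambda>m z. z) (\<lambda>m z. z) n c) = lunitB (tw_bun K X \<eta>) n c"
proof -
  have t: "trep c \<in> fibprod (prod_bun K X) (tw_bun K X \<eta>) n" using tensor_trep(1)[OF c] .
  obtain g x h y where tt: "trep c = ((g, x), (h, y))" by (metis prod.collapse)
  have r: "g \<in> cells K n" "h \<in> cells K n" "x \<in> cells X n" "y = x"
    using fib_pt[THEN iffD1, OF t[unfolded tt]] by auto
  have p: "((g, x), (h, x)) \<in> fibprod (tw_bun K X (tw_one K)) (tw_bun K X \<eta>) n" using r by (simp add: fib_tw)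
  show ?thesis unfolding tmap_def lunitB_def using tt r phi_tcls_tw[OF K p]
    by (simp add: pm_def)
qed

lemma runit_coh:
  assumes K: "is_sab_group K" and c: "c \<in> cells (tot (tensor K (tw_bun K X \<eta>) (prod_bun K X))) n"
  shows "phi K n (tmap K (tw_bun K X \<eta>) (tw_bun K X (tw_one K)) (\<lambda>m z. z) (\<lambda>m z. z) n c) = runitB (tw_bun K X \<eta>) n c"
proof -
  have t: "trep c \<in> fibprod (tw_bun K X \<eta>) (prod_bun K X) n" using tensor_trep(1)[OF c] .
  obtain g x h y where tt: "trep c = ((g, x), (h, y))" by (metis prod.collapse)
  have r: "g \<in> cells K n" "h \<in> cells K n" "x \<in> cells X n" "y = x"
    using fib_tp[THEN iffD1, OF t[unfolded tt]] by auto
  have p: "((g, x), (h, x)) \<in> fibprod (tw_bun K X \<eta>) (tw_bun K X (tw_one K)) n" using r by (simp add: fib_tw)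
  show ?thesis unfolding tmap_def runitB_def using tt r phi_tcls_tw[OF K p] gcomm[OF K r(1,2)]
    by (simp add: pm_def)
qed



lemma proj_tensor_tw: "proj (tensor K (tw_bun K X \<eta>) (tw_bun K X \<xi>)) n c = snd (phi K n c)"
  by (simp add: tensor_proj phi_pm pm_def)

lemma tensor_tw_rep:
  assumes "c \<in> cells (tot (tensor K (tw_bun K X \<eta>) (tw_bun K X \<xi>))) n"
  shows "\<exists>g h x. trep c = ((g, x), (h, x)) \<and> g \<in> cells K n \<and> h \<in> cells K n \<and> x \<in> cells X n"
proof -
  obtain g h x where "trep c = ((g, x), (h, x))" "g \<in> cells K n" "h \<in> cells K n" "x \<in> cells X n"
    using fib_twE[OF tensor_trep(1)[OF assms]] .
  then show ?thesis by blast
qed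

definition Iv :: "'k sgrp \<Rightarrow> nat \<Rightarrow> (('k \<times> 'x) \<times> ('k \<times> 'x)) set \<times> ('k \<times> 'x) \<Rightarrow> 'k \<times> 'x" where
  "Iv K n q = (gmul K n (fst (phi K n (fst q))) (fst (snd q)), snd (snd q))"

lemma tgen_assoc:
  assumes K: "is_sab_group K"
  and ab: "(a, b) \<in> tgen K (tensor K (tw_bun K X \<eta>) (tw_bun K X \<xi>)) (tw_bun K X \<zeta>) n"
  shows "Iv K n a = Iv K n b"
proof -
  let ?A = "tw_bun K X \<eta>" and ?B = "tw_bun K X \<xi>" and ?C = "tw_bun K X \<zeta>"
  let ?AB = "tensor K ?A ?B"
  have "\<exists>k e f. a = (act ?AB n k e, f) \<and> b = (e, act ?C n k f) \<and>
      k \<in> cells K n \<and> (e, f) \<in> fibprod ?AB ?C n"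
    using ab unfolding tgen_def by (simp only: mem_Collect_eq prod.inject) metis
  then obtain k e f where abk: "a = (act ?AB n k e, f)" "b = (e, act ?C n k f)"
      "k \<in> cells K n" "(e, f) \<in> fibprod ?AB ?C n" by blast
  have ef: "e \<in> cells (tot ?AB) n" "f \<in> cells (tot ?C) n" using abk(4) by (auto simp add: fibprod_def)
  obtain g h x where r: "trep e = ((g, x), (h, x))" "g \<in> cells K n" "h \<in> cells K n" "x \<in> cells X n"
    using tensor_tw_rep[OF ef(1)] by blast
  obtain m y where f: "f = (m, y)" "m \<in> cells K n" using ef(2) by auto
  have p: "((gmul K n k g, x), (h, x)) \<in> fibprod ?A ?B n" using r abk(3) K by (simp add: fib_tw)
  have pa: "phi K n (act ?AB n k e) = (gmul K n (gmul K n k g) h, x)"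
    unfolding tensor_act using r phi_tcls_tw[OF K p] by (simp add: pm_def)
  have pe: "phi K n e = (gmul K n g h, x)" using r by (simp add: phi_pm pm_def)
  have s: "gmul K n g h \<in> cells K n" using K r by simp
  have alg: "gmul K n (gmul K n (gmul K n k g) h) m = gmul K n (gmul K n g h) (gmul K n k m)"
  proof -
    have "gmul K n (gmul K n k g) h = gmul K n k (gmul K n g h)" using gassoc[OF K abk(3) r(2,3)] .
    moreover have "gmul K n (gmul K n k (gmul K n g h)) m = gmul K n k (gmul K n (gmul K n g h) m)"
      using gassoc[OF K abk(3) s f(2)] .
    moreover have "gmul K n (gmul K n g h) (gmul K n k m) = gmul K n (gmul K n (gmul K n g h) k) m"
      using gassoc[OF K s abk(3) f(2)] by simp
    moreover have "gmul K n (gmul K n g h) k = gmul K n k (gmul K n g h)" using gcomm[OF K s abk(3)] .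
    ultimately show ?thesis using gassoc[OF K abk(3) s f(2)] by simp
  qed
  show ?thesis using abk(1,2) pa pe f alg by (simp add: Iv_def)
qed

lemma assoc_coh:
  assumes K: "is_sab_group K"
  and w: "w \<in> cells (tot (tensor K (tw_bun K X \<eta>) (tensor K (tw_bun K X \<xi>) (tw_bun K X \<zeta>)))) n"
  shows "phi K n (tmap K (tw_bun K X (tw_mult K \<eta> \<xi>)) (tw_bun K X \<zeta>) (phi K) (\<lambda>m z. z) n
              (assocB K (tw_bun K X \<eta>) (tw_bun K X \<xi>) (tw_bun K X \<zeta>) n w))
           = phi K n (tmap K (tw_bun K X \<eta>) (tw_bun K X (tw_mult K \<xi> \<zeta>)) (\<lambda>m z. z) (phi K) n w)"
proof -
  let ?A = "tw_bun K X \<eta>" and ?B = "tw_bun K X \<xi>" and ?C = "tw_bun K X \<zeta>"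
  let ?AB = "tensor K ?A ?B" and ?BC = "tensor K ?B ?C"
  have tw: "trep w \<in> fibprod ?A ?BC n" using tensor_trep(1)[OF w] .
  obtain e c' where tt: "trep w = (e, c')" by fastforce
  have ec: "e \<in> cells (tot ?A) n" "c' \<in> cells (tot ?BC) n" "proj ?A n e = proj ?BC n c'"
    using tw tt by (auto simp add: fibprod_def)
  obtain g x where e: "e = (g, x)" "g \<in> cells K n" "x \<in> cells X n" using ec(1) by auto
  obtain h l y where r: "trep c' = ((h, y), (l, y))" "h \<in> cells K n" "l \<in> cells K n" "y \<in> cells X n"
    using tensor_tw_rep[OF ec(2)] by blast
  have xy: "y = x" using ec(3) e r by (simp add: tensor_proj)
  let ?p1 = "((g, x), (h, x))"
  have p1: "?p1 \<in> fibprod ?A ?B n" using e r xy by (simp add: fib_tw)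
  let ?c1 = "tcls K ?A ?B n ?p1"
  have c1: "?c1 \<in> cells (tot ?AB) n" using tensor_cellsI[OF p1] .
  have phic1: "phi K n ?c1 = (gmul K n g h, x)" using phi_tcls_tw[OF K p1] by (simp add: pm_def)
  have as: "assocB K ?A ?B ?C n w = tcls K ?AB ?C n (?c1, (l, x))"
    unfolding assocB_def Let_def using tt r e xy by simp
  let ?q0 = "(?c1, (l, x))"
  have q0: "?q0 \<in> fibprod ?AB ?C n"
    unfolding fibprod_def using c1 e r phic1 by (simp add: proj_tensor_tw)
  let ?R = "trep (tcls K ?AB ?C n ?q0)"
  have qr: "(?q0, ?R) \<in> trel K ?AB ?C n" by (rule trep_tcls)
  have IR: "Iv K n ?q0 = Iv K n ?R" by (rule trel_inv[where I="Iv K n", OF tgen_assoc[OF K] qr])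
  have Rf: "?R \<in> fibprod ?AB ?C n" using trel_fib[OF qr q0] .
  obtain c2 z2 where R: "?R = (c2, z2)" using prod.exhaust by blast
  have cz: "c2 \<in> cells (tot ?AB) n" "z2 \<in> cells (tot ?C) n" "proj ?AB n c2 = proj ?C n z2"
    using Rf R by (auto simp add: fibprod_def)
  obtain g2 h2 x2 where r2: "trep c2 = ((g2, x2), (h2, x2))" "g2 \<in> cells K n" "h2 \<in> cells K n" "x2 \<in> cells X n"
    using tensor_tw_rep[OF cz(1)] by blast
  obtain l2 x3 where z2: "z2 = (l2, x3)" "l2 \<in> cells K n" using cz(2) by auto
  have pc2: "phi K n c2 = (gmul K n g2 h2, x2)" using r2 by (simp add: phi_pm pm_def)
  have x23: "x3 = x2" using cz(3) z2 pc2 by (simp add: proj_tensor_tw)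
  have IR': "gmul K n (gmul K n g2 h2) l2 = gmul K n (gmul K n g h) l" "x2 = x"
    using IR R z2 pc2 phic1 x23 by (auto simp add: Iv_def)
  have pL: "((gmul K n g2 h2, x2), (l2, x2)) \<in> fibprod (tw_bun K X (tw_mult K \<eta> \<xi>)) ?C n"
    using r2 z2 K by (simp add: fib_tw)
  have L: "phi K n (tmap K (tw_bun K X (tw_mult K \<eta> \<xi>)) ?C (phi K) (\<lambda>m z. z) n (assocB K ?A ?B ?C n w))
      = (gmul K n (gmul K n g h) l, x)"
    unfolding tmap_def as using R pc2 z2 x23 phi_tcls_tw[OF K pL] IR' by (simp add: pm_def)
  have pc': "phi K n c' = (gmul K n h l, x)" using r xy by (simp add: phi_pm pm_def)
  have pR: "((g, x), (gmul K n h l, x)) \<in> fibprod ?A (tw_bun K X (tw_mult K \<xi> \<zeta>)) n"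
    using e r K by (simp add: fib_tw)
  have Rt: "phi K n (tmap K ?A (tw_bun K X (tw_mult K \<xi> \<zeta>)) (\<lambda>m z. z) (phi K) n w) = (gmul K n g (gmul K n h l), x)"
    unfolding tmap_def using tt e pc' phi_tcls_tw[OF K pR] by (simp add: pm_def)
  show ?thesis unfolding L Rt using gassoc[OF K e(2) r(2,3)] by simp
qed


theorem mainTheorem19:
  fixes K :: "'k sgrp" and X :: "'x sset"
  assumes "is_sab_group K" and "is_sset X"
  shows
    \<comment> \<open>Twist_K(X) is closed under the unit and the product\<close>
    "is_twisting K X (tw_one K) \<and>
     (\<forall>\<eta> \<xi>. is_twisting K X \<eta> \<and> is_twisting K X \<xi> \<longrightarrow> is_twisting K X (tw_mult K \<eta> \<xi>)) \<and>
     \<comment> \<open>unit structure isomorphism K x X \<cong> K x_1 X (canonical, identity on elements)\<close>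
     bun_iso K X (prod_bun K X) (tw_bun K X (tw_one K)) (\<lambda>n z. z) \<and>
     \<comment> \<open>product structure isomorphisms\<close>
     (\<forall>\<eta> \<xi>. is_twisting K X \<eta> \<and> is_twisting K X \<xi> \<longrightarrow>
        bun_iso K X (tensor K (tw_bun K X \<eta>) (tw_bun K X \<xi>)) (tw_bun K X (tw_mult K \<eta> \<xi>)) (phi K)) \<and>
     \<comment> \<open>associativity coherence\<close>
     (\<forall>\<eta> \<xi> \<zeta>. is_twisting K X \<eta> \<and> is_twisting K X \<xi> \<and> is_twisting K X \<zeta> \<longrightarrow>
        (\<forall>n. \<forall>w \<in> cells (tot (tensor K (tw_bun K X \<eta>)
                     (tensor K (tw_bun K X \<xi>) (tw_bun K X \<zeta>)))) n.
           phi K n (tmap K (tw_bun K X (tw_mult K \<eta> \<xi>)) (tw_bun K X \<zeta>) (phi K) (\<lambda>m z. z) n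
              (assocB K (tw_bun K X \<eta>) (tw_bun K X \<xi>) (tw_bun K X \<zeta>) n w))
           = phi K n (tmap K (tw_bun K X \<eta>) (tw_bun K X (tw_mult K \<xi> \<zeta>)) (\<lambda>m z. z) (phi K) n w))) \<and>
     \<comment> \<open>unit coherence (left and right)\<close>
     (\<forall>\<eta>. is_twisting K X \<eta> \<longrightarrow>
        (\<forall>n. \<forall>c \<in> cells (tot (tensor K (prod_bun K X) (tw_bun K X \<eta>))) n.
           phi K n (tmap K (tw_bun K X (tw_one K)) (tw_bun K X \<eta>) (\<lambda>m z. z) (\<lambda>m z. z) n c)
           = lunitB (tw_bun K X \<eta>) n c) \<and>
        (\<forall>n. \<forall>c \<in> cells (tot (tensor K (tw_bun K X \<eta>) (prod_bun K X))) n.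
           phi K n (tmap K (tw_bun K X \<eta>) (tw_bun K X (tw_one K)) (\<lambda>m z. z) (\<lambda>m z. z) n c)
           = runitB (tw_bun K X \<eta>) n c)) \<and>
     \<comment> \<open>symmetry coherence\<close>
     (\<forall>\<eta> \<xi>. is_twisting K X \<eta> \<and> is_twisting K X \<xi> \<longrightarrow>
        (\<forall>n. \<forall>c \<in> cells (tot (tensor K (tw_bun K X \<eta>) (tw_bun K X \<xi>))) n.
           phi K n (braidB K (tw_bun K X \<eta>) (tw_bun K X \<xi>) n c) = phi K n c))"
proof -
  have K: "is_sab_group K" and X: "is_sset X" using assms by auto
  have A: "is_twisting K X (tw_one K)" using twc_twisting[OF K X twc_one[OF K]] .
  have B: "\<forall>\<eta> \<xi>. is_twisting K X \<eta> \<and> is_twisting K X \<xi> \<longrightarrow> is_twisting K X (tw_mult K \<eta> \<xi>)"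
  proof (intro allI impI)
    fix \<eta> \<xi> assume H: "is_twisting K X \<eta> \<and> is_twisting K X \<xi>"
    show "is_twisting K X (tw_mult K \<eta> \<xi>)"
      using twc_twisting[OF K X twc_mult[OF K X twisting_twc[OF K X] twisting_twc[OF K X]]] H by simp
  qed
  have C: "bun_iso K X (prod_bun K X) (tw_bun K X (tw_one K)) (\<lambda>n z. z)" using prod_iso[OF K X] .
  have D: "\<forall>\<eta> \<xi>. is_twisting K X \<eta> \<and> is_twisting K X \<xi> \<longrightarrow>
        bun_iso K X (tensor K (tw_bun K X \<eta>) (tw_bun K X \<xi>)) (tw_bun K X (tw_mult K \<eta> \<xi>)) (phi K)"
  proof (intro allI impI)
    fix \<eta> \<xi> assume H: "is_twisting K X \<eta> \<and> is_twisting K X \<xi>"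
    then show "bun_iso K X (tensor K (tw_bun K X \<eta>) (tw_bun K X \<xi>)) (tw_bun K X (tw_mult K \<eta> \<xi>)) (phi K)"
      using tw_tensor_iso[OF K X] by simp
  qed
  show ?thesis
    apply (intro conjI A B C D allI impI ballI)
       apply (assumption | rule assoc_coh[OF K] lunit_coh[OF K] runit_coh[OF K] braid_coh[OF K])+
    done
qed

end
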